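(* Let $N\ge0$; for $t=1,\dots,N$ let $p_t\ge1$ and positive integers $n_{t1}\ge\dots\ge n_{tp_t}$ be given, and let $(\alpha_t,\beta_t)\in\mathbb C^2\setminus\{0\}$ be such that the points $(\alpha_t:\beta_t)\in\mathbb{CP}^1$ are pairwise different. Let $\mathfrak g$ have basis $g,h_1,h_2,e^i_{tj},f^i_{tj}$ ($t=1,\dots,N$, $i=1,\dots,p_t$, $j=1,\dots,n_{ti}$) with brackets $[g,h_1]=h_1$, $[g,h_2]=h_2$, $[g,e^i_{tk}]=e^i_{tk}$, $[e^i_{tj},f^i_{tk}]=e^i_{t,j-k}$ if $j>k$, $[e^i_{tj},f^i_{tk}]=\alpha_th_1+\beta_th_2$ if $j=k$, all other brackets of basis elements (not determined by these and antisymmetry) being zero. Then $\mathfrak g$ is a Lie algebra whose Jordan–Kronecker invariants consist of one Kronecker $3\times3$ block and the Jordan tuples $J_{\lambda_t}(2n_{t1},\dots,2n_{tp_t})$, $t=1,\dots,N$.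
   Context: For a finite-dimensional complex Lie algebra $\mathfrak g$ and $x\in\mathfrak g^*$, let $\mathcal A_x$ be the skew form $(\xi,\eta)\mapsto\langle x,[\xi,\eta]\rangle$. By the Jordan–Kronecker theorem, a pair of skew forms on a finite-dimensional complex vector space admits a basis in which both are block-diagonal with Jordan $2n\times2n$ blocks with eigenvalues $\mu\in\mathbb C\cup\{\infty\}$ ($A_i=\begin{pmatrix}0&J_\mu\\-J_\mu^T&0\end{pmatrix}$, $B_i=\begin{pmatrix}0&I_n\\-I_n&0\end{pmatrix}$) and Kronecker $(2k-1)\times(2k-1)$ blocks ($A_i=\begin{pmatrix}0&P\\-P^T&0\end{pmatrix}$, $B_i=\begin{pmatrix}0&Q\\-Q^T&0\end{pmatrix}$, $P=(I_{k-1}|0)$, $Q=(0|I_{k-1})$); block data grouped by eigenvalue are unique. The JK invariants of $\mathfrak g$ are the Kronecker sizes and the Jordan tuples $J_{\lambda_i}(\dots)$ (sizes of Jordan blocks with common eigenvalue $\lambda_i$; distinct eigenvalues as distinct formal symbols) of $(\mathcal A_x,\mathcal A_a)$ for $(x,a)$ in a nonempty Zariski open subset of $\mathfrak g^*\times\mathfrak g^*$. *)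

theory Defs
  imports "HOL-Analysis.Analysis" "HOL-Library.Multiset"
begin

text \<open>Blocks of the Jordan--Kronecker normal form.  \<open>Jor mu n\<close> is a Jordan block of
 size 2n x 2n with eigenvalue mu (None = infinity); \<open>Kron k\<close> is a Kronecker block of
 size (2k-1) x (2k-1).\<close>
datatype jkblock = Jor "complex option" nat | Kron nat

fun block_dim :: "jkblock \<Rightarrow> nat" where
  "block_dim (Jor mu n) = 2 * n"
| "block_dim (Kron k) = 2 * k - 1"

fun block_ok :: "jkblock \<Rightarrow> bool" where
  "block_ok (Jor mu n) = (n \<ge> 1)"
| "block_ok (Kron k) = (k \<ge> 1)"

text \<open>The skew matrix (0 M; -M^T 0) with the upper-left zero block of size m.\<close>
definition skew_blk :: "nat \<Rightarrow> (nat \<Rightarrow> nat \<Rightarrow> complex) \<Rightarrow> nat \<Rightarrow> nat \<Rightarrow> complex" where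
  "skew_blk m M i j =
     (if i < m \<and> m \<le> j then M i (j - m)
      else if m \<le> i \<and> j < m then - M j (i - m) else 0)"

definition jordan_cell :: "complex \<Rightarrow> nat \<Rightarrow> nat \<Rightarrow> complex" where
  "jordan_cell mu r s = (if r = s then mu else if s = r + 1 then 1 else 0)"

definition id_cell :: "nat \<Rightarrow> nat \<Rightarrow> complex" where
  "id_cell r s = (if r = s then 1 else 0)"

text \<open>P = (I_{k-1} | 0) and Q = (0 | I_{k-1}).\<close>
definition P_cell :: "nat \<Rightarrow> nat \<Rightarrow> complex" where
  "P_cell r s = (if s = r then 1 else 0)"

definition Q_cell :: "nat \<Rightarrow> nat \<Rightarrow> complex" where
  "Q_cell r s = (if s = r + 1 then 1 else 0)"

fun blockA :: "jkblock \<Rightarrow> nat \<Rightarrow> nat \<Rightarrow> complex" where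
  "blockA (Jor (Some mu) n) = skew_blk n (jordan_cell mu)"
| "blockA (Jor None n) = skew_blk n id_cell"
| "blockA (Kron k) = skew_blk (k - 1) P_cell"

fun blockB :: "jkblock \<Rightarrow> nat \<Rightarrow> nat \<Rightarrow> complex" where
  "blockB (Jor (Some mu) n) = skew_blk n id_cell"
| "blockB (Jor None n) = skew_blk n (jordan_cell 0)"
| "blockB (Kron k) = skew_blk (k - 1) Q_cell"

definition is_basis_family ::
  "('v \<Rightarrow> complex) set \<Rightarrow> 'i set \<Rightarrow> ('i \<Rightarrow> 'v \<Rightarrow> complex) \<Rightarrow> bool" where
  "is_basis_family V S e \<longleftrightarrow> finite S \<and> (\<forall>s\<in>S. e s \<in> V) \<and>
     (\<forall>v\<in>V. \<exists>!c. (\<forall>s. s \<notin> S \<longrightarrow> c s = 0) \<and> v = (\<lambda>k. \<Sum>s\<in>S. c s * e s k))"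

definition JK_decomposition ::
  "('v \<Rightarrow> complex) set \<Rightarrow> (('v \<Rightarrow> complex) \<Rightarrow> ('v \<Rightarrow> complex) \<Rightarrow> complex)
   \<Rightarrow> (('v \<Rightarrow> complex) \<Rightarrow> ('v \<Rightarrow> complex) \<Rightarrow> complex) \<Rightarrow> jkblock list \<Rightarrow> bool" where
  "JK_decomposition V A B bl \<longleftrightarrow> (\<forall>b\<in>set bl. block_ok b) \<and>
     (\<exists>e :: nat \<times> nat \<Rightarrow> 'v \<Rightarrow> complex.
        is_basis_family V {(b, i). b < length bl \<and> i < block_dim (bl ! b)} e \<and>
        (\<forall>b i b' j. b < length bl \<longrightarrow> i < block_dim (bl ! b) \<longrightarrow>
                   b' < length bl \<longrightarrow> j < block_dim (bl ! b') \<longrightarrow>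
           A (e (b, i)) (e (b', j)) = (if b = b' then blockA (bl ! b) i j else 0) \<and>
           B (e (b, i)) (e (b', j)) = (if b = b' then blockB (bl ! b) i j else 0)))"

inductive_set polyfun2 :: "(('v \<Rightarrow> complex) \<times> ('v \<Rightarrow> complex) \<Rightarrow> complex) set" where
  pf_const: "(\<lambda>_. c) \<in> polyfun2"
| pf_fst: "(\<lambda>(x, a). x k) \<in> polyfun2"
| pf_snd: "(\<lambda>(x, a). a k) \<in> polyfun2"
| pf_add: "f \<in> polyfun2 \<Longrightarrow> g \<in> polyfun2 \<Longrightarrow> (\<lambda>z. f z + g z) \<in> polyfun2"
| pf_mult: "f \<in> polyfun2 \<Longrightarrow> g \<in> polyfun2 \<Longrightarrow> (\<lambda>z. f z * g z) \<in> polyfun2"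

definition zariski_open_in ::
  "(('v \<Rightarrow> complex) \<times> ('v \<Rightarrow> complex)) set \<Rightarrow> (('v \<Rightarrow> complex) \<times> ('v \<Rightarrow> complex)) set \<Rightarrow> bool" where
  "zariski_open_in D U \<longleftrightarrow>
     (\<exists>F \<subseteq> polyfun2. U = {z \<in> D. \<exists>f\<in>F. f z \<noteq> 0})"

definition is_lie_algebra :: "('v \<Rightarrow> complex) set \<Rightarrow>
   (('v \<Rightarrow> complex) \<Rightarrow> ('v \<Rightarrow> complex) \<Rightarrow> ('v \<Rightarrow> complex)) \<Rightarrow> bool" where
  "is_lie_algebra V br \<longleftrightarrow>
     (\<forall>x\<in>V. \<forall>y\<in>V. br x y \<in> V) \<and>
     (\<forall>x\<in>V. \<forall>y\<in>V. \<forall>z\<in>V. \<forall>c::complex.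
        br (\<lambda>k. x k + c * y k) z = (\<lambda>k. br x z k + c * br y z k) \<and>
        br z (\<lambda>k. x k + c * y k) = (\<lambda>k. br z x k + c * br z y k)) \<and>
     (\<forall>x\<in>V. br x x = (\<lambda>_. 0)) \<and>
     (\<forall>x\<in>V. \<forall>y\<in>V. \<forall>z\<in>V.
        (\<lambda>k. br x (br y z) k + br y (br z x) k + br z (br x y) k) = (\<lambda>_. 0))"

text \<open>Basis indices: g, h1, h2, E t i j = e^i_{tj}, F t i j = f^i_{tj}.\<close>
datatype gidx = G | H1 | H2 | E nat nat nat | F nat nat nat

definition gI :: "nat \<Rightarrow> (nat \<Rightarrow> nat) \<Rightarrow> (nat \<Rightarrow> nat \<Rightarrow> nat) \<Rightarrow> gidx set" where
  "gI N p n = {G, H1, H2}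
     \<union> {E t i j | t i j. 1 \<le> t \<and> t \<le> N \<and> 1 \<le> i \<and> i \<le> p t \<and> 1 \<le> j \<and> j \<le> n t i}
     \<union> {F t i j | t i j. 1 \<le> t \<and> t \<le> N \<and> 1 \<le> i \<and> i \<le> p t \<and> 1 \<le> j \<and> j \<le> n t i}"

definition unit_vec :: "gidx \<Rightarrow> gidx \<Rightarrow> complex" where
  "unit_vec a = (\<lambda>k. if k = a then 1 else 0)"

fun base_br :: "(nat \<Rightarrow> complex) \<Rightarrow> (nat \<Rightarrow> complex) \<Rightarrow> gidx \<Rightarrow> gidx \<Rightarrow> gidx \<Rightarrow> complex" where
  "base_br \<alpha> \<beta> G H1 = unit_vec H1"
| "base_br \<alpha> \<beta> G H2 = unit_vec H2"
| "base_br \<alpha> \<beta> G (E t i k) = unit_vec (E t i k)"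
| "base_br \<alpha> \<beta> (E t i j) (F t' i' k) =
     (if t = t' \<and> i = i' then
        (if k < j then unit_vec (E t i (j - k))
         else if j = k then (\<lambda>l. \<alpha> t * unit_vec H1 l + \<beta> t * unit_vec H2 l)
         else (\<lambda>_. 0))
      else (\<lambda>_. 0))"
| "base_br \<alpha> \<beta> _ _ = (\<lambda>_. 0)"

definition basis_br :: "(nat \<Rightarrow> complex) \<Rightarrow> (nat \<Rightarrow> complex) \<Rightarrow> gidx \<Rightarrow> gidx \<Rightarrow> gidx \<Rightarrow> complex" where
  "basis_br \<alpha> \<beta> a b = (\<lambda>l. base_br \<alpha> \<beta> a b l - base_br \<alpha> \<beta> b a l)"

definition gspace :: "nat \<Rightarrow> (nat \<Rightarrow> nat) \<Rightarrow> (nat \<Rightarrow> nat \<Rightarrow> nat) \<Rightarrow> (gidx \<Rightarrow> complex) set" where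
  "gspace N p n = {v. \<forall>k. k \<notin> gI N p n \<longrightarrow> v k = 0}"

definition gbr :: "nat \<Rightarrow> (nat \<Rightarrow> nat) \<Rightarrow> (nat \<Rightarrow> nat \<Rightarrow> nat) \<Rightarrow> (nat \<Rightarrow> complex) \<Rightarrow> (nat \<Rightarrow> complex)
   \<Rightarrow> (gidx \<Rightarrow> complex) \<Rightarrow> (gidx \<Rightarrow> complex) \<Rightarrow> (gidx \<Rightarrow> complex)" where
  "gbr N p n \<alpha> \<beta> x y =
     (\<lambda>l. \<Sum>a\<in>gI N p n. \<Sum>b\<in>gI N p n. x a * y b * basis_br \<alpha> \<beta> a b l)"

text \<open>Elements of the dual space g* are given by their coordinates in the dual basis;
 the form A_x(xi, eta) = <x, [xi, eta]>.\<close>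
definition formA :: "nat \<Rightarrow> (nat \<Rightarrow> nat) \<Rightarrow> (nat \<Rightarrow> nat \<Rightarrow> nat) \<Rightarrow> (nat \<Rightarrow> complex) \<Rightarrow> (nat \<Rightarrow> complex)
   \<Rightarrow> (gidx \<Rightarrow> complex) \<Rightarrow> (gidx \<Rightarrow> complex) \<Rightarrow> (gidx \<Rightarrow> complex) \<Rightarrow> complex" where
  "formA N p n \<alpha> \<beta> x \<xi> \<eta> = (\<Sum>l\<in>gI N p n. x l * gbr N p n \<alpha> \<beta> \<xi> \<eta> l)"

end

theory Submission
  imports Defs "HOL-Library.Function_Algebras" "HOL-Computational_Algebra.Formal_Power_Series"
begin

no_notation vec_nth (infixl "$" 90)
notation fps_nth (infixl "$" 75)

lemma gI_simps[simp]:
  "G \<in> gI N p n" "H1 \<in> gI N p n" "H2 \<in> gI N p n"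
  "E t i j \<in> gI N p n \<longleftrightarrow> 1 \<le> t \<and> t \<le> N \<and> 1 \<le> i \<and> i \<le> p t \<and> 1 \<le> j \<and> j \<le> n t i"
  "F t i j \<in> gI N p n \<longleftrightarrow> 1 \<le> t \<and> t \<le> N \<and> 1 \<le> i \<and> i \<le> p t \<and> 1 \<le> j \<and> j \<le> n t i"
  by (auto simp: gI_def)

definition Tset :: "nat \<Rightarrow> (nat \<Rightarrow> nat) \<Rightarrow> (nat \<Rightarrow> nat \<Rightarrow> nat) \<Rightarrow> (nat \<times> nat \<times> nat) set" where
  "Tset N p n = (SIGMA t:{1..N}. SIGMA i:{1..p t}. {1..n t i})"

lemma finite_Tset[simp]: "finite (Tset N p n)"
  by (auto simp: Tset_def )

lemma gI_eq: "gI N p n = {G, H1, H2} \<union> (\<lambda>(t,i,j). E t i j) ` Tset N p n \<union> (\<lambda>(t,i,j). F t i j) ` Tset N p n"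
  by (auto simp: gI_def Tset_def image_def)

lemma finite_gI[simp]: "finite (gI N p n)"
  by (simp add: gI_eq)

lemma sum_unit_left: "(\<Sum>b\<in>gI N p n. unit_vec a b * f b) = f a" if "a \<in> gI N p n"
proof -
  have "(\<lambda>b. unit_vec a b * f b) = (\<lambda>b. if a = b then f b else 0)" by (auto simp: unit_vec_def)
  then have "(\<Sum>b\<in>gI N p n. unit_vec a b * f b) = (\<Sum>b\<in>gI N p n. if a = b then f b else 0)" by metis
  also have "\<dots> = f a" using that by simp
  finally show ?thesis .
qed

fun bev :: "(nat \<Rightarrow> complex) \<Rightarrow> (nat \<Rightarrow> complex) \<Rightarrow> gidx \<Rightarrow> gidx \<Rightarrow> (gidx \<Rightarrow> complex) \<Rightarrow> complex" where
  "bev \<alpha> \<beta> G H1 f = f H1"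
| "bev \<alpha> \<beta> G H2 f = f H2"
| "bev \<alpha> \<beta> G (E t i k) f = f (E t i k)"
| "bev \<alpha> \<beta> (E t i j) (F t' i' k) f =
     (if t = t' \<and> i = i' then
        (if k < j then f (E t i (j - k))
         else if j = k then \<alpha> t * f H1 + \<beta> t * f H2
         else 0)
      else 0)"
| "bev \<alpha> \<beta> _ _ f = 0"

lemma sum_base: assumes "c \<in> gI N p n" "d \<in> gI N p n"
  shows "(\<Sum>b\<in>gI N p n. base_br \<alpha> \<beta> c d b * f b) = bev \<alpha> \<beta> c d f"
proof -
  have e: "(\<Sum>b\<in>gI N p n. unit_vec u b * f b) = f u" if "u \<in> gI N p n" for u
    using sum_unit_left[OF that] .
  show ?thesis using assms
    apply (cases c; cases d)
    apply (auto simp: e sum.distrib distrib_right mult.assoc sum_distrib_left[symmetric])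
    apply (rule e) apply auto
    done
qed

lemma sum_br: assumes "c \<in> gI N p n" "d \<in> gI N p n"
  shows "(\<Sum>b\<in>gI N p n. basis_br \<alpha> \<beta> c d b * f b) = bev \<alpha> \<beta> c d f - bev \<alpha> \<beta> d c f"
  using sum_base[OF assms, of \<alpha> \<beta> f] sum_base[OF assms(2,1), of \<alpha> \<beta> f]
  by (simp add: basis_br_def left_diff_distrib sum_subtractf)

definition "Jac \<alpha> \<beta> a c d l = bev \<alpha> \<beta> c d (\<lambda>b. basis_br \<alpha> \<beta> a b l) - bev \<alpha> \<beta> d c (\<lambda>b. basis_br \<alpha> \<beta> a b l)
       + (bev \<alpha> \<beta> d a (\<lambda>b. basis_br \<alpha> \<beta> c b l) - bev \<alpha> \<beta> a d (\<lambda>b. basis_br \<alpha> \<beta> c b l))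
       + (bev \<alpha> \<beta> a c (\<lambda>b. basis_br \<alpha> \<beta> d b l) - bev \<alpha> \<beta> c a (\<lambda>b. basis_br \<alpha> \<beta> d b l))"

lemma if_app: "(if c then f else g) x = (if c then f x else g x)"
  by simp

lemma unit_vec_app: "unit_vec a k = (if k = a then 1 else 0)"
  by (simp add: unit_vec_def)

lemma jac_all: "a \<in> gI N p n \<Longrightarrow> c \<in> gI N p n \<Longrightarrow> d \<in> gI N p n \<Longrightarrow> Jac \<alpha> \<beta> a c d l = 0"
  unfolding Jac_def
  apply (induct a; induct c; induct d)
  apply (simp_all only: bev.simps basis_br_def base_br.simps diff_self diff_zero add_0_left add_0_right mult_zero_right mult_zero_left if_cancel minus_diff_eq diff_0 neg_0_equal_iff_equal)
  apply (simp_all only: add.right_inverse add.left_inverse minus_minus minus_zero add_0_left add_0_right)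
  apply (simp_all add: if_app unit_vec_app cong: if_cong split del: if_split)
  subgoal for x1 x2 x3 x1a x2a x3a x1aa x2aa x3aa
    apply (cases "x1aa = x1a \<and> x2aa = x2a"; cases "x1aa = x1 \<and> x2aa = x2"; cases "x1a = x1 \<and> x2a = x2"; simp only: if_True if_False simp_thms)
    apply (elim conjE; simp)+
    apply (cases "x3a + x3 < x3aa"; cases "x3a + x3 = x3aa"; cases "x3a < x3aa"; cases "x3 < x3aa")
    apply (simp_all add: add.commute)
    apply arith+
    done
  subgoal for x1 x2 x3 x1a x2a x3a x1aa x2aa x3aa
    apply (cases "x1aa = x1a \<and> x2aa = x2a"; cases "x1aa = x1 \<and> x2aa = x2"; cases "x1a = x1 \<and> x2a = x2"; simp only: if_True if_False simp_thms)
    apply (elim conjE; simp)+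
    apply (cases "x3a + x3aa < x3"; cases "x3a + x3aa = x3"; cases "x3a < x3"; cases "x3aa < x3")
    apply (simp_all add: add.commute)
    apply arith+
    done
  subgoal for x1 x2 x3 x1a x2a x3a x1aa x2aa x3aa
    apply (cases "x1aa = x1a \<and> x2aa = x2a"; cases "x1aa = x1 \<and> x2aa = x2"; cases "x1a = x1 \<and> x2a = x2"; simp only: if_True if_False simp_thms)
    apply (elim conjE; simp)+
    apply (cases "x3 + x3aa < x3a"; cases "x3 + x3aa = x3a"; cases "x3 < x3a"; cases "x3aa < x3a")
    apply (simp_all add: add.commute)
    apply arith+
    done
  done

lemma base_out: "a \<in> gI N p n \<Longrightarrow> b \<in> gI N p n \<Longrightarrow> k \<notin> gI N p n \<Longrightarrow> base_br \<alpha> \<beta> a b k = 0"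
  by (cases a; cases b) (auto simp: unit_vec_def)

lemma gbr_closed: "gbr N p n \<alpha> \<beta> x y \<in> gspace N p n"
  by (auto simp: gspace_def gbr_def basis_br_def base_out intro!: sum.neutral)

lemma triple_swap:
  fixes A B :: "'i \<Rightarrow> 'i \<Rightarrow> complex"
  shows "(\<Sum>a\<in>I. \<Sum>b\<in>I. x a * (\<Sum>c\<in>I. \<Sum>d\<in>I. y c * z d * B3 c d b) * A a b)
       = (\<Sum>a\<in>I. \<Sum>c\<in>I. \<Sum>d\<in>I. x a * y c * z d * (\<Sum>b\<in>I. B3 c d b * A a b))"
proof -
  have "(\<Sum>a\<in>I. \<Sum>b\<in>I. x a * (\<Sum>c\<in>I. \<Sum>d\<in>I. y c * z d * B3 c d b) * A a b)
      = (\<Sum>a\<in>I. \<Sum>b\<in>I. \<Sum>c\<in>I. \<Sum>d\<in>I. x a * y c * z d * (B3 c d b * A a b))"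
    by (simp add: sum_distrib_left sum_distrib_right mult.assoc mult.left_commute)
  also have "\<dots> = (\<Sum>a\<in>I. \<Sum>c\<in>I. \<Sum>b\<in>I. \<Sum>d\<in>I. x a * y c * z d * (B3 c d b * A a b))"
    by (rule sum.cong[OF refl], rule sum.swap)
  also have "\<dots> = (\<Sum>a\<in>I. \<Sum>c\<in>I. \<Sum>d\<in>I. \<Sum>b\<in>I. x a * y c * z d * (B3 c d b * A a b))"
    by (rule sum.cong[OF refl], rule sum.cong[OF refl], rule sum.swap)
  also have "\<dots> = (\<Sum>a\<in>I. \<Sum>c\<in>I. \<Sum>d\<in>I. x a * y c * z d * (\<Sum>b\<in>I. B3 c d b * A a b))"
    by (simp add: sum_distrib_left)
  finally show ?thesis .
qed

lemma gbr_gbr: "gbr N p n \<alpha> \<beta> x (gbr N p n \<alpha> \<beta> y z) l =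
   (\<Sum>a\<in>gI N p n. \<Sum>c\<in>gI N p n. \<Sum>d\<in>gI N p n. x a * y c * z d *
      (bev \<alpha> \<beta> c d (\<lambda>b. basis_br \<alpha> \<beta> a b l) - bev \<alpha> \<beta> d c (\<lambda>b. basis_br \<alpha> \<beta> a b l)))"
  unfolding gbr_def
  apply (subst triple_swap)
  apply (intro sum.cong refl)
  apply (subst sum_br)
  apply auto
  done

lemma jacobi: "(\<lambda>k. gbr N p n \<alpha> \<beta> x (gbr N p n \<alpha> \<beta> y z) k + gbr N p n \<alpha> \<beta> y (gbr N p n \<alpha> \<beta> z x) k
     + gbr N p n \<alpha> \<beta> z (gbr N p n \<alpha> \<beta> x y) k) = (\<lambda>_. 0)"
proof
  fix l
  let ?I = "gI N p n"
  let ?K = "\<lambda>a c d. bev \<alpha> \<beta> c d (\<lambda>b. basis_br \<alpha> \<beta> a b l) - bev \<alpha> \<beta> d c (\<lambda>b. basis_br \<alpha> \<beta> a b l)"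
  have 2: "gbr N p n \<alpha> \<beta> y (gbr N p n \<alpha> \<beta> z x) l = (\<Sum>a\<in>?I. \<Sum>c\<in>?I. \<Sum>d\<in>?I. x a * y c * z d * ?K c d a)"
  proof -
    have "gbr N p n \<alpha> \<beta> y (gbr N p n \<alpha> \<beta> z x) l = (\<Sum>c\<in>?I. \<Sum>d\<in>?I. \<Sum>a\<in>?I. y c * z d * x a * ?K c d a)"
      by (rule gbr_gbr)
    also have "\<dots> = (\<Sum>c\<in>?I. \<Sum>a\<in>?I. \<Sum>d\<in>?I. y c * z d * x a * ?K c d a)"
      by (rule sum.cong[OF refl], rule sum.swap)
    also have "\<dots> = (\<Sum>a\<in>?I. \<Sum>c\<in>?I. \<Sum>d\<in>?I. y c * z d * x a * ?K c d a)"
      by (rule sum.swap)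
    finally show ?thesis by (simp add: mult_ac)
  qed
  have 3: "gbr N p n \<alpha> \<beta> z (gbr N p n \<alpha> \<beta> x y) l = (\<Sum>a\<in>?I. \<Sum>c\<in>?I. \<Sum>d\<in>?I. x a * y c * z d * ?K d a c)"
  proof -
    have "gbr N p n \<alpha> \<beta> z (gbr N p n \<alpha> \<beta> x y) l = (\<Sum>d\<in>?I. \<Sum>a\<in>?I. \<Sum>c\<in>?I. z d * x a * y c * ?K d a c)"
      by (rule gbr_gbr)
    also have "\<dots> = (\<Sum>a\<in>?I. \<Sum>d\<in>?I. \<Sum>c\<in>?I. z d * x a * y c * ?K d a c)"
      by (rule sum.swap)
    also have "\<dots> = (\<Sum>a\<in>?I. \<Sum>c\<in>?I. \<Sum>d\<in>?I. z d * x a * y c * ?K d a c)"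
      by (rule sum.cong[OF refl], rule sum.swap)
    finally show ?thesis by (simp add: mult_ac)
  qed
  have 1: "gbr N p n \<alpha> \<beta> x (gbr N p n \<alpha> \<beta> y z) l = (\<Sum>a\<in>?I. \<Sum>c\<in>?I. \<Sum>d\<in>?I. x a * y c * z d * ?K a c d)"
    by (rule gbr_gbr)
  have "gbr N p n \<alpha> \<beta> x (gbr N p n \<alpha> \<beta> y z) l + gbr N p n \<alpha> \<beta> y (gbr N p n \<alpha> \<beta> z x) l
     + gbr N p n \<alpha> \<beta> z (gbr N p n \<alpha> \<beta> x y) l
     = (\<Sum>a\<in>?I. \<Sum>c\<in>?I. \<Sum>d\<in>?I. x a * y c * z d * Jac \<alpha> \<beta> a c d l)"
    unfolding 1 2 3 Jac_def by (simp add: sum.distrib[symmetric] algebra_simps)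
  also have "\<dots> = 0"
    by (intro sum.neutral ballI) (simp add: jac_all)
  finally show "gbr N p n \<alpha> \<beta> x (gbr N p n \<alpha> \<beta> y z) l + gbr N p n \<alpha> \<beta> y (gbr N p n \<alpha> \<beta> z x) l
     + gbr N p n \<alpha> \<beta> z (gbr N p n \<alpha> \<beta> x y) l = 0" .
qed

lemma lie: "is_lie_algebra (gspace N p n) (gbr N p n \<alpha> \<beta>)"
  unfolding is_lie_algebra_def
proof (intro conjI ballI allI)
  fix x y z :: "gidx \<Rightarrow> complex" and c :: complex
  show "gbr N p n \<alpha> \<beta> x y \<in> gspace N p n" by (rule gbr_closed)
  show "gbr N p n \<alpha> \<beta> (\<lambda>k. x k + c * y k) z = (\<lambda>k. gbr N p n \<alpha> \<beta> x z k + c * gbr N p n \<alpha> \<beta> y z k)"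
    by (simp add: gbr_def sum.distrib sum_distrib_left algebra_simps)
  show "gbr N p n \<alpha> \<beta> z (\<lambda>k. x k + c * y k) = (\<lambda>k. gbr N p n \<alpha> \<beta> z x k + c * gbr N p n \<alpha> \<beta> z y k)"
    by (simp add: gbr_def sum.distrib sum_distrib_left algebra_simps)
  show "gbr N p n \<alpha> \<beta> x x = (\<lambda>_. 0)"
  proof
    fix l
    have "gbr N p n \<alpha> \<beta> x x l = (\<Sum>a\<in>gI N p n. \<Sum>b\<in>gI N p n. x a * x b * base_br \<alpha> \<beta> a b l)
        - (\<Sum>a\<in>gI N p n. \<Sum>b\<in>gI N p n. x a * x b * base_br \<alpha> \<beta> b a l)"
      by (simp add: gbr_def basis_br_def sum_subtractf right_diff_distrib)
    also have "(\<Sum>a\<in>gI N p n. \<Sum>b\<in>gI N p n. x a * x b * base_br \<alpha> \<beta> b a l)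
       = (\<Sum>b\<in>gI N p n. \<Sum>a\<in>gI N p n. x a * x b * base_br \<alpha> \<beta> b a l)"
      by (rule sum.swap)
    finally show "gbr N p n \<alpha> \<beta> x x l = 0" by (simp add: mult.commute)
  qed
  show "(\<lambda>k. gbr N p n \<alpha> \<beta> x (gbr N p n \<alpha> \<beta> y z) k + gbr N p n \<alpha> \<beta> y (gbr N p n \<alpha> \<beta> z x) k
     + gbr N p n \<alpha> \<beta> z (gbr N p n \<alpha> \<beta> x y) k) = (\<lambda>_. 0)"
    by (rule jacobi)
qed


lemma tri_solve:
  fixes c :: "nat \<Rightarrow> nat \<Rightarrow> complex"
  assumes "\<And>q. c q q \<noteq> 0"
  shows "\<exists>\<phi>. \<forall>q<m. (\<Sum>i\<le>q. \<phi> i * c q i) = b q"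
proof (induct m)
  case 0 then show ?case by simp
next
  case (Suc m)
  then obtain \<phi> where h: "\<forall>q<m. (\<Sum>i\<le>q. \<phi> i * c q i) = b q" by blast
  define \<psi> where "\<psi> = \<phi>(m := (b m - (\<Sum>i<m. \<phi> i * c m i)) / c m m)"
  have "\<forall>q<Suc m. (\<Sum>i\<le>q. \<psi> i * c q i) = b q"
  proof (intro allI impI)
    fix q assume q: "q < Suc m"
    show "(\<Sum>i\<le>q. \<psi> i * c q i) = b q"
    proof (cases "q < m")
      case True
      have "(\<Sum>i\<le>q. \<psi> i * c q i) = (\<Sum>i\<le>q. \<phi> i * c q i)"
        using True by (intro sum.cong) (auto simp: \<psi>_def)
      then show ?thesis using h True by simp
    next
      case False
      then have qm: "q = m" using q by simp
      have "(\<Sum>i\<le>m. \<psi> i * c m i) = (\<Sum>i<m. \<psi> i * c m i) + \<psi> m * c m m"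
        by (simp add: lessThan_Suc_atMost[symmetric])
      also have "(\<Sum>i<m. \<psi> i * c m i) = (\<Sum>i<m. \<phi> i * c m i)"
        by (intro sum.cong) (auto simp: \<psi>_def)
      finally show ?thesis using qm assms[of m] by (simp add: \<psi>_def)
    qed
  qed
  then show ?case by blast
qed


lemma block_exists:
  fixes Px Pa :: "complex fps" and m :: nat
  assumes a0: "Pa $ 0 \<noteq> 0" and c1: "Px $ 1 * Pa $ 0 - Pa $ 1 * Px $ 0 \<noteq> 0"
  shows "\<exists>U V. \<forall>r<m. \<forall>s<m. (U r * V s * Pa) $ (m - 1) = (if r = s then 1 else 0) \<and>
     (U r * V s * Px) $ (m - 1) = (if r = s then Px $ 0 / Pa $ 0 else 0) + (if s = r + 1 then 1 else 0)"
proof -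
  define lam where "lam = Px $ 0 / Pa $ 0"
  define \<rho> where "\<rho> = Px * inverse Pa - fps_const lam"
  have ia: "inverse Pa * Pa = 1" using a0 by (rule inverse_mult_eq_1)
  have inv0: "inverse Pa $ 0 = 1 / Pa $ 0" by (simp add: divide_inverse)
  have "(inverse Pa * Pa) $ 1 = 0" using ia by simp
  then have h: "Pa $ 1 + Pa $ 0 * (Pa $ 0 * inverse Pa $ 1) = 0"
    using a0 by (simp add: fps_mult_nth_1 inv0 field_simps)
  have inv1: "inverse Pa $ 1 = - (Pa $ 1) / (Pa $ 0) ^ 2"
  proof -
    have "inverse Pa $ 1 * (Pa $ 0) ^ 2 = - (Pa $ 1)"
      using h by (simp add: power2_eq_square eq_neg_iff_add_eq_0 mult_ac add.commute)
    then show ?thesis using a0 by (simp add: field_simps)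
  qed
  then have inv1': "inverse Pa $ Suc 0 = - (Pa $ 1) / (Pa $ 0) ^ 2" by simp
  have r0: "\<rho> $ 0 = 0" by (simp add: \<rho>_def lam_def inv0 divide_inverse)
  have r1: "\<rho> $ 1 = (Px $ 1 * Pa $ 0 - Pa $ 1 * Px $ 0) / (Pa $ 0) ^ 2"
    using a0 by (simp add: \<rho>_def fps_mult_nth_1 inv0 inv1' field_simps power2_eq_square)
  have r1nz: "\<rho> $ 1 \<noteq> 0" using r1 c1 a0 by simp
  define \<sigma> where "\<sigma> = fps_shift 1 \<rho>"
  have rho_eq: "\<rho> = fps_X * \<sigma>"
    by (rule fps_ext) (simp add: fps_X_mult_nth \<sigma>_def r0)
  have s0: "\<sigma> $ 0 = \<rho> $ 1" by (simp add: \<sigma>_def)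
  have F1: "(\<rho> ^ k * G) $ d = (if d < k then 0 else (\<sigma> ^ k * G) $ (d - k))" for k d G
    by (simp add: rho_eq power_mult_distrib mult.assoc fps_X_power_mult_nth)
  have F1': "(G * \<rho> ^ k) $ d = (if d < k then 0 else (\<sigma> ^ k * G) $ (d - k))" for k d G
    using F1[of k G d] by (simp add: mult.commute)
  have F0: "(\<rho> ^ k) $ d = 0" if "d < k" for k d
    using F1[of k 1 d] that by simp
  have F2: "(\<rho> ^ k) $ k = (\<rho> $ 1) ^ k" for k
    using F1[of k 1 k] by (simp add: fps_power_zeroth s0)
  define cc where "cc = (\<lambda>q i. (\<rho> ^ (m - 1 - q)) $ (m - 1 - i))"
  have ccd: "cc q q \<noteq> 0" for q
    using F2 r1nz by (simp add: cc_def)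
  obtain \<phi> where phi: "\<forall>q<m. (\<Sum>i\<le>q. \<phi> i * cc q i) = (if q = 0 then 1 else 0)"
    using tri_solve[of cc m "\<lambda>q. if q = 0 then 1 else 0", OF ccd] by blast
  define \<Phi> where "\<Phi> = Abs_fps \<phi>"
  have Phi: "(\<Phi> * \<rho> ^ k) $ (m - 1) = (if k = m - 1 then 1 else 0)" if "k < m" for k
  proof -
    define q where "q = m - 1 - k"
    have qm: "q < m" "k = m - 1 - q" using that by (auto simp: q_def)
    have "(\<Phi> * \<rho> ^ k) $ (m - 1) = (\<Sum>i=0..m-1. \<phi> i * (\<rho> ^ k) $ (m - 1 - i))"
      by (simp add: fps_mult_nth \<Phi>_def)
    also have "\<dots> = (\<Sum>i\<le>q. \<phi> i * (\<rho> ^ k) $ (m - 1 - i))"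
    proof (rule sum.mono_neutral_right)
      show "finite {0..m-1}" by simp
      show "{..q} \<subseteq> {0..m-1}" using qm by auto
      show "\<forall>i\<in>{0..m - 1} - {..q}. \<phi> i * (\<rho> ^ k) $ (m - 1 - i) = 0"
      proof
        fix i assume "i \<in> {0..m - 1} - {..q}"
        then have "m - 1 - i < k" using qm that by auto
        then show "\<phi> i * (\<rho> ^ k) $ (m - 1 - i) = 0" using F0 by simp
      qed
    qed
    also have "\<dots> = (\<Sum>i\<le>q. \<phi> i * cc q i)" by (simp add: cc_def qm)
    also have "\<dots> = (if q = 0 then 1 else 0)" using phi qm by simp
    also have "(q = 0) = (k = m - 1)" using that by (auto simp: q_def)
    finally show ?thesis by simp
  qed
  have Phi_big: "(\<Phi> * \<rho> ^ k) $ (m - 1) = 0" if "m - 1 < k" for k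
    using that F1'[of \<Phi> k "m - 1"] by simp
  define U where "U = (\<lambda>r. \<rho> ^ r * \<Phi> * inverse Pa)"
  define V where "V = (\<lambda>s. \<rho> ^ (m - 1 - s))"
  have pxe: "Px * inverse Pa = \<rho> + fps_const lam" by (simp add: \<rho>_def)
  have "\<forall>r<m. \<forall>s<m. (U r * V s * Pa) $ (m - 1) = (if r = s then 1 else 0) \<and>
     (U r * V s * Px) $ (m - 1) = (if r = s then lam else 0) + (if s = r + 1 then 1 else 0)"
  proof (intro allI impI)
    fix r s assume r: "r < m" and s: "s < m"
    have pw: "\<rho> ^ (m - 1 - s + r) = \<rho> ^ (m - 1 - s) * \<rho> ^ r" by (simp add: power_add)
    have e1: "U r * V s * Pa = \<Phi> * \<rho> ^ (m - 1 - s + r)"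
    proof -
      have "U r * V s * Pa = \<Phi> * (\<rho> ^ (m - 1 - s) * \<rho> ^ r) * (inverse Pa * Pa)"
        unfolding U_def V_def by (simp only: mult_ac)
      then show ?thesis by (simp only: ia pw mult_1_right)
    qed
    have e2: "U r * V s * Px = fps_const lam * (\<Phi> * \<rho> ^ (m - 1 - s + r)) + \<Phi> * \<rho> ^ (m - 1 - s + r + 1)"
    proof -
      have "U r * V s * Px = \<Phi> * (\<rho> ^ (m - 1 - s) * \<rho> ^ r) * (Px * inverse Pa)"
        unfolding U_def V_def by (simp only: mult_ac)
      also have "\<dots> = \<Phi> * \<rho> ^ (m - 1 - s + r) * (\<rho> + fps_const lam)"
        by (simp only: pxe pw)
      also have "\<dots> = fps_const lam * (\<Phi> * \<rho> ^ (m - 1 - s + r)) + \<Phi> * (\<rho> ^ (m - 1 - s + r) * \<rho>)"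
        by (simp only: distrib_left distrib_right mult_ac add.commute)
      also have "\<rho> ^ (m - 1 - s + r) * \<rho> = \<rho> ^ (m - 1 - s + r + 1)" by (simp add: power_add)
      finally show ?thesis .
    qed
    have A: "(\<Phi> * \<rho> ^ (m - 1 - s + r)) $ (m - 1) = (if r = s then 1 else 0)"
    proof (cases "r \<le> s")
      case True
      then have "m - 1 - s + r < m" "(m - 1 - s + r = m - 1) = (r = s)" using s by auto
      then show ?thesis using Phi[of "m - 1 - s + r"] by simp
    next
      case False
      then have "m - 1 < m - 1 - s + r" "r \<noteq> s" using s by auto
      then show ?thesis using Phi_big[of "m - 1 - s + r"] by simp
    qed
    have B: "(\<Phi> * \<rho> ^ (m - 1 - s + r + 1)) $ (m - 1) = (if s = r + 1 then 1 else 0)"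
    proof (cases "r + 1 \<le> s")
      case True
      then have "m - 1 - s + r + 1 < m" "(m - 1 - s + r + 1 = m - 1) = (s = r + 1)" using s by auto
      then show ?thesis using Phi[of "m - 1 - s + r + 1"] by simp
    next
      case False
      then have "m - 1 < m - 1 - s + r + 1" "s \<noteq> r + 1" using s r by auto
      then show ?thesis using Phi_big[of "m - 1 - s + r + 1"] by simp
    qed
    show "(U r * V s * Pa) $ (m - 1) = (if r = s then 1 else 0) \<and>
     (U r * V s * Px) $ (m - 1) = (if r = s then lam else 0) + (if s = r + 1 then 1 else 0)"
      using A B by (simp add: e1 e2)
  qed
  then show ?thesis unfolding lam_def by blast
qed


lemma sum_fun_app: "(\<Sum>a\<in>t. f a) k = (\<Sum>a\<in>t. f a k)"
  by (induct t rule: infinite_finite_induct) auto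

lemma span_lemma:
  fixes I :: "'k set" and S :: "'s set" and e :: "'s \<Rightarrow> 'k \<Rightarrow> complex" and g :: "'s \<Rightarrow> 'k"
  assumes fI: "finite I" and fS: "finite S"
    and uniq: "\<And>c. (\<And>s. s \<notin> S \<Longrightarrow> c s = 0) \<Longrightarrow> (\<lambda>k. \<Sum>s\<in>S. c s * e s k) = (\<lambda>_. 0) \<Longrightarrow> \<forall>s\<in>S. c s = 0"
    and Ig: "I \<subseteq> g ` S"
    and v: "\<And>k. k \<notin> I \<Longrightarrow> v k = 0"
    and eV: "\<And>s k. s \<in> S \<Longrightarrow> k \<notin> I \<Longrightarrow> e s k = 0"
  shows "\<exists>c. (\<forall>s. s \<notin> S \<longrightarrow> c s = 0) \<and> v = (\<lambda>k. \<Sum>s\<in>S. c s * e s k)"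
proof -
  interpret vs: vector_space "\<lambda>(c::complex) (f::'k \<Rightarrow> complex). (\<lambda>k. c * f k)"
    by unfold_locales (auto simp: algebra_simps fun_eq_iff)
  have inj: "inj_on e S"
  proof (rule inj_onI)
    fix s1 s2 assume s: "s1 \<in> S" "s2 \<in> S" "e s1 = e s2"
    show "s1 = s2"
    proof (rule ccontr)
      assume ne: "s1 \<noteq> s2"
      define c where "c = (\<lambda>s. if s = s1 then (1::complex) else if s = s2 then -1 else 0)"
      have "(\<lambda>k. \<Sum>s\<in>S. c s * e s k) = (\<lambda>k. e s1 k - e s2 k)"
      proof
        fix k
        have "(\<Sum>s\<in>S. c s * e s k) = (\<Sum>s\<in>S. (if s = s1 then e s1 k else 0) + (if s = s2 then - e s2 k else 0))"
          by (intro sum.cong) (auto simp: c_def ne)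
        also have "\<dots> = e s1 k - e s2 k" using s fS by (simp add: sum.distrib)
        finally show "(\<Sum>s\<in>S. c s * e s k) = e s1 k - e s2 k" .
      qed
      also have "\<dots> = (\<lambda>_. 0)" using s by simp
      finally have "\<forall>s\<in>S. c s = 0" by (intro uniq) (auto simp: c_def s)
      then show False using s by (auto simp: c_def)
    qed
  qed
  have indep: "vs.independent (e ` S)"
    unfolding vs.independent_explicit_module
  proof (intro allI impI)
    fix t u w
    assume t: "finite t" "t \<subseteq> e ` S" and z: "(\<Sum>v\<in>t. (\<lambda>k. u v * v k)) = 0" and w: "w \<in> t"
    define c where "c = (\<lambda>s. if s \<in> S \<and> e s \<in> t then u (e s) else 0)"
    have "(\<lambda>k. \<Sum>s\<in>S. c s * e s k) = (\<lambda>_. 0)"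
    proof
      fix k
      have "(\<Sum>s\<in>S. c s * e s k) = (\<Sum>s\<in>S. if e s \<in> t then u (e s) * e s k else 0)"
        by (intro sum.cong) (auto simp: c_def)
      also have "\<dots> = (\<Sum>s\<in>{s\<in>S. e s \<in> t}. u (e s) * e s k)"
        using fS by (simp add: sum.inter_filter)
      also have "\<dots> = (\<Sum>v\<in>e ` {s\<in>S. e s \<in> t}. u v * v k)"
        by (rule sum.reindex_cong[symmetric, OF _ refl]) (auto intro: inj_on_subset[OF inj])
      also have "e ` {s\<in>S. e s \<in> t} = t" using t by auto
      also have "(\<Sum>v\<in>t. u v * v k) = (\<Sum>v\<in>t. (\<lambda>k. u v * v k)) k" by (simp add: sum_fun_app)
      also have "\<dots> = 0" using z by simp
      finally show "(\<Sum>s\<in>S. c s * e s k) = 0" .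
    qed
    then have "\<forall>s\<in>S. c s = 0" by (intro uniq) (auto simp: c_def)
    moreover obtain s where "s \<in> S" "w = e s" using w t by auto
    ultimately show "u w = 0" using w by (auto simp: c_def)
  qed
  define W where "W = (\<lambda>k l. if l = k then (1::complex) else 0) ` I"
  have spW: "v' \<in> vs.span W" if "\<And>k. k \<notin> I \<Longrightarrow> v' k = 0" for v'
  proof -
    have "v' = (\<Sum>k\<in>I. (\<lambda>l. v' k * (if l = k then 1 else 0)))"
    proof
      fix l
      show "v' l = (\<Sum>k\<in>I. (\<lambda>l. v' k * (if l = k then 1 else 0))) l"
        using that fI by (cases "l \<in> I") (auto simp: sum_fun_app if_distrib cong: if_cong)
    qed
    also have "\<dots> \<in> vs.span W"
      by (intro vs.span_sum vs.span_scale vs.span_base) (auto simp: W_def)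
    finally show ?thesis .
  qed
  have cW: "card W \<le> card I" unfolding W_def by (rule card_image_le[OF fI])
  have cI: "card I \<le> card S"
    using card_mono[OF finite_imageI[OF fS] Ig] card_image_le[OF fS, of g] by simp
  have eS: "card (e ` S) = card S" using card_image[OF inj] .
  have inV: "e ` S \<subseteq> vs.span W"
    using spW eV by auto
  have vspan: "v \<in> vs.span (e ` S)"
  proof (rule ccontr)
    assume nv: "v \<notin> vs.span (e ` S)"
    have i2: "vs.independent (insert v (e ` S))" by (rule vs.independent_insertI[OF nv indep])
    have sub: "insert v (e ` S) \<subseteq> vs.span W"
      using inV spW v by auto
    have "card (insert v (e ` S)) \<le> card W"
      using vs.independent_span_bound[OF _ i2 sub] W_def fI by auto
    moreover have "v \<notin> e ` S" using nv vs.span_base by blast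
    then have "card (insert v (e ` S)) = card S + 1" using fS eS by simp
    ultimately show False using cW cI by simp
  qed
  then obtain t r where t: "finite t" "t \<subseteq> e ` S" and vr: "v = (\<Sum>a\<in>t. (\<lambda>k. r a * a k))"
    unfolding vs.span_explicit by blast
  define c where "c = (\<lambda>s. if s \<in> S \<and> e s \<in> t then r (e s) else 0)"
  have "v = (\<lambda>k. \<Sum>s\<in>S. c s * e s k)"
  proof
    fix k
    have "v k = (\<Sum>a\<in>t. r a * a k)" by (simp add: vr sum_fun_app)
    also have "t = e ` {s\<in>S. e s \<in> t}" using t by auto
    also have "(\<Sum>a\<in>e ` {s\<in>S. e s \<in> t}. r a * a k) = (\<Sum>s\<in>{s\<in>S. e s \<in> t}. r (e s) * e s k)"
      by (rule sum.reindex_cong[OF _ refl]) (auto intro: inj_on_subset[OF inj])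
    also have "\<dots> = (\<Sum>s\<in>S. if e s \<in> t then r (e s) * e s k else 0)"
      using fS by (simp add: sum.inter_filter)
    also have "\<dots> = (\<Sum>s\<in>S. c s * e s k)"
      by (intro sum.cong) (auto simp: c_def)
    finally show "v k = (\<Sum>s\<in>S. c s * e s k)" .
  qed
  moreover have "\<forall>s. s \<notin> S \<longrightarrow> c s = 0" by (simp add: c_def)
  ultimately show ?thesis by blast
qed


lemma inj_E: "inj_on (\<lambda>(t,i,j). E t i j) A" by (auto simp: inj_on_def)
lemma inj_F: "inj_on (\<lambda>(t,i,j). F t i j) A" by (auto simp: inj_on_def)

lemma sum_I: "(\<Sum>a\<in>gI N p n. f a) = f G + f H1 + f H2 + (\<Sum>(t,i,j)\<in>Tset N p n. f (E t i j))
    + (\<Sum>(t,i,j)\<in>Tset N p n. f (F t i j))"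
proof -
  let ?T = "Tset N p n"
  let ?A = "{G, H1, H2}" and ?B = "(\<lambda>(t,i,j). E t i j) ` ?T" and ?C = "(\<lambda>(t,i,j). F t i j) ` ?T"
  have d1: "?A \<inter> ?B = {}" "(?A \<union> ?B) \<inter> ?C = {}" by auto
  have "(\<Sum>a\<in>gI N p n. f a) = sum f (?A \<union> ?B \<union> ?C)" by (simp add: gI_eq)
  also have "\<dots> = sum f (?A \<union> ?B) + sum f ?C"
    by (rule sum.union_disjoint) (auto)
  also have "sum f (?A \<union> ?B) = sum f ?A + sum f ?B"
    by (rule sum.union_disjoint) (auto)
  also have "sum f ?A = f G + f H1 + f H2" by (simp add: add.assoc)
  also have "sum f ?B = (\<Sum>(t,i,j)\<in>?T. f (E t i j))"
    by (subst sum.reindex[OF inj_E]) (simp add: case_prod_beta o_def)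
  also have "sum f ?C = (\<Sum>(t,i,j)\<in>?T. f (F t i j))"
    by (subst sum.reindex[OF inj_F]) (simp add: case_prod_beta o_def)
  finally show ?thesis by (simp add: add.assoc)
qed

definition Qf :: "nat \<Rightarrow> (nat \<Rightarrow> nat) \<Rightarrow> (nat \<Rightarrow> nat \<Rightarrow> nat) \<Rightarrow> (nat \<Rightarrow> complex) \<Rightarrow> (nat \<Rightarrow> complex)
   \<Rightarrow> (gidx \<Rightarrow> complex) \<Rightarrow> (gidx \<Rightarrow> complex) \<Rightarrow> (gidx \<Rightarrow> complex) \<Rightarrow> complex" where
  "Qf N p n \<alpha> \<beta> y \<xi> \<eta> = (\<Sum>a\<in>gI N p n. \<Sum>b\<in>gI N p n. \<xi> a * \<eta> b * bev \<alpha> \<beta> a b y)"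

lemma formA_Q: "formA N p n \<alpha> \<beta> y \<xi> \<eta> = Qf N p n \<alpha> \<beta> y \<xi> \<eta> - Qf N p n \<alpha> \<beta> y \<eta> \<xi>"
proof -
  let ?I = "gI N p n"
  have "formA N p n \<alpha> \<beta> y \<xi> \<eta> = (\<Sum>l\<in>?I. \<Sum>a\<in>?I. \<Sum>b\<in>?I. \<xi> a * \<eta> b * (basis_br \<alpha> \<beta> a b l * y l))"
    by (simp add: formA_def gbr_def sum_distrib_left sum_distrib_right mult_ac)
  also have "\<dots> = (\<Sum>a\<in>?I. \<Sum>l\<in>?I. \<Sum>b\<in>?I. \<xi> a * \<eta> b * (basis_br \<alpha> \<beta> a b l * y l))"
    by (rule sum.swap)
  also have "\<dots> = (\<Sum>a\<in>?I. \<Sum>b\<in>?I. \<Sum>l\<in>?I. \<xi> a * \<eta> b * (basis_br \<alpha> \<beta> a b l * y l))"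
    by (rule sum.cong[OF refl], rule sum.swap)
  also have "\<dots> = (\<Sum>a\<in>?I. \<Sum>b\<in>?I. \<xi> a * \<eta> b * (bev \<alpha> \<beta> a b y - bev \<alpha> \<beta> b a y))"
    by (intro sum.cong refl) (simp add: sum_distrib_left[symmetric] sum_br)
  also have "\<dots> = (\<Sum>a\<in>?I. \<Sum>b\<in>?I. \<xi> a * \<eta> b * bev \<alpha> \<beta> a b y) - (\<Sum>a\<in>?I. \<Sum>b\<in>?I. \<xi> a * \<eta> b * bev \<alpha> \<beta> b a y)"
    by (simp add: right_diff_distrib sum_subtractf)
  also have "(\<Sum>a\<in>?I. \<Sum>b\<in>?I. \<xi> a * \<eta> b * bev \<alpha> \<beta> b a y) = (\<Sum>b\<in>?I. \<Sum>a\<in>?I. \<xi> a * \<eta> b * bev \<alpha> \<beta> b a y)"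
    by (rule sum.swap)
  finally show ?thesis by (simp add: Qf_def mult_ac)
qed

definition LG :: "nat \<Rightarrow> (nat \<Rightarrow> nat) \<Rightarrow> (nat \<Rightarrow> nat \<Rightarrow> nat) \<Rightarrow> (gidx \<Rightarrow> complex) \<Rightarrow> (gidx \<Rightarrow> complex) \<Rightarrow> complex" where
  "LG N p n y \<eta> = y H1 * \<eta> H1 + y H2 * \<eta> H2 + (\<Sum>(t,i,j)\<in>Tset N p n. y (E t i j) * \<eta> (E t i j))"

definition RE :: "nat \<Rightarrow> (nat \<Rightarrow> nat) \<Rightarrow> (nat \<Rightarrow> nat \<Rightarrow> nat) \<Rightarrow> (nat \<Rightarrow> complex) \<Rightarrow> (nat \<Rightarrow> complex)
   \<Rightarrow> (gidx \<Rightarrow> complex) \<Rightarrow> nat \<Rightarrow> nat \<Rightarrow> nat \<Rightarrow> (gidx \<Rightarrow> complex) \<Rightarrow> complex" where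
  "RE N p n \<alpha> \<beta> y t i j \<eta> = (\<Sum>(t',i',k)\<in>Tset N p n. \<eta> (F t' i' k) * bev \<alpha> \<beta> (E t i j) (F t' i' k) y)"

lemma Qf_expand: "Qf N p n \<alpha> \<beta> y \<xi> \<eta> = \<xi> G * LG N p n y \<eta>
   + (\<Sum>(t,i,j)\<in>Tset N p n. \<xi> (E t i j) * RE N p n \<alpha> \<beta> y t i j \<eta>)"
proof -
  have "Qf N p n \<alpha> \<beta> y \<xi> \<eta> = (\<Sum>a\<in>gI N p n. \<xi> a * (\<Sum>b\<in>gI N p n. \<eta> b * bev \<alpha> \<beta> a b y))"
    by (simp add: Qf_def sum_distrib_left mult_ac)
  also have "\<dots> = \<xi> G * LG N p n y \<eta>
   + (\<Sum>(t,i,j)\<in>Tset N p n. \<xi> (E t i j) * RE N p n \<alpha> \<beta> y t i j \<eta>)"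
    by (simp add: sum_I[where f="\<lambda>b. _ b * bev \<alpha> \<beta> _ b y"] sum_I[of _ N p n] LG_def RE_def case_prod_beta mult_ac)
  finally show ?thesis .
qed


definition hv :: "complex \<Rightarrow> complex \<Rightarrow> gidx \<Rightarrow> complex" where
  "hv c1 c2 = (\<lambda>l. if l = H1 then c1 else if l = H2 then c2 else 0)"

lemma hv_simps[simp]: "hv c1 c2 G = 0" "hv c1 c2 H1 = c1" "hv c1 c2 H2 = c2"
  "hv c1 c2 (E t i j) = 0" "hv c1 c2 (F t i j) = 0"
  by (auto simp: hv_def)

lemma unitG_simps[simp]: "unit_vec G G = 1" "unit_vec G H1 = 0" "unit_vec G H2 = 0"
  "unit_vec G (E t i j) = 0" "unit_vec G (F t i j) = 0"
  by (auto simp: unit_vec_def)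

locale jk0 =
  fixes N :: nat and p :: "nat \<Rightarrow> nat" and n :: "nat \<Rightarrow> nat \<Rightarrow> nat" and \<alpha> \<beta> :: "nat \<Rightarrow> complex"
begin

abbreviation "I \<equiv> gI N p n"
abbreviation "T \<equiv> Tset N p n"
abbreviation "fA \<equiv> formA N p n \<alpha> \<beta>"
abbreviation "Q \<equiv> Qf N p n \<alpha> \<beta>"

definition TI :: "(nat \<times> nat) set" where "TI = {(t,i). 1 \<le> t \<and> t \<le> N \<and> 1 \<le> i \<and> i \<le> p t}"

definition ev :: "nat \<Rightarrow> nat \<Rightarrow> (nat \<Rightarrow> complex) \<Rightarrow> gidx \<Rightarrow> complex" where
  "ev t0 i0 u = (\<lambda>l. case l of E t i j \<Rightarrow> if t = t0 \<and> i = i0 \<and> 1 \<le> j \<and> j \<le> n t0 i0 then u j else 0 | _ \<Rightarrow> 0)"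

definition fv :: "nat \<Rightarrow> nat \<Rightarrow> (nat \<Rightarrow> complex) \<Rightarrow> gidx \<Rightarrow> complex" where
  "fv t0 i0 u = (\<lambda>l. case l of F t i j \<Rightarrow> if t = t0 \<and> i = i0 \<and> 1 \<le> j \<and> j \<le> n t0 i0 then u j else 0 | _ \<Rightarrow> 0)"

lemma ev_simps[simp]: "ev t0 i0 u G = 0" "ev t0 i0 u H1 = 0" "ev t0 i0 u H2 = 0" "ev t0 i0 u (F t i j) = 0"
  "ev t0 i0 u (E t i j) = (if t = t0 \<and> i = i0 \<and> 1 \<le> j \<and> j \<le> n t0 i0 then u j else 0)"
  by (auto simp: ev_def)

lemma fv_simps[simp]: "fv t0 i0 u G = 0" "fv t0 i0 u H1 = 0" "fv t0 i0 u H2 = 0" "fv t0 i0 u (E t i j) = 0"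
  "fv t0 i0 u (F t i j) = (if t = t0 \<and> i = i0 \<and> 1 \<le> j \<and> j \<le> n t0 i0 then u j else 0)"
  by (auto simp: fv_def)

lemma T_mem: "(t,i,j) \<in> T \<longleftrightarrow> 1 \<le> t \<and> t \<le> N \<and> 1 \<le> i \<and> i \<le> p t \<and> 1 \<le> j \<and> j \<le> n t i"
  by (auto simp: Tset_def)

lemma sum_T_block:
  assumes "(t0, i0) \<in> TI"
  shows "(\<Sum>(t,i,j)\<in>T. if t = t0 \<and> i = i0 then h j else 0) = (\<Sum>j\<in>{1..n t0 i0}. h j)"
proof -
  have "(\<Sum>(t,i,j)\<in>T. if t = t0 \<and> i = i0 then h j else 0) = (\<Sum>q\<in>T. if fst q = t0 \<and> fst (snd q) = i0 then h (snd (snd q)) else 0)"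
    by (simp add: case_prod_beta)
  also have "\<dots> = (\<Sum>q\<in>{q\<in>T. fst q = t0 \<and> fst (snd q) = i0}. h (snd (snd q)))"
    by (simp add: sum.inter_filter)
  also have "{q\<in>T. fst q = t0 \<and> fst (snd q) = i0} = (\<lambda>j. (t0, i0, j)) ` {1..n t0 i0}"
    using assms by (auto simp: T_mem TI_def)
  also have "(\<Sum>q\<in>(\<lambda>j. (t0, i0, j)) ` {1..n t0 i0}. h (snd (snd q))) = (\<Sum>j\<in>{1..n t0 i0}. h j)"
    by (subst sum.reindex) (auto simp: inj_on_def)
  finally show ?thesis .
qed

lemma sum_T_zero: "(\<And>t i j. f t i j = 0) \<Longrightarrow> (\<Sum>(t,i,j)\<in>T. f t i j) = 0"
  by (auto intro!: sum.neutral)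

lemma LG_G: "LG N p n y (unit_vec G) = 0"
  by (simp add: LG_def)

lemma LG_hv: "LG N p n y (hv c1 c2) = y H1 * c1 + y H2 * c2"
  by (simp add: LG_def)

lemma LG_fv: "LG N p n y (fv t0 i0 w) = 0"
  by (simp add: LG_def)

lemma LG_ev: assumes "(t0, i0) \<in> TI"
  shows "LG N p n y (\<lambda>l. ev t0 i0 u l + hv c1 c2 l) = y H1 * c1 + y H2 * c2 + (\<Sum>j\<in>{1..n t0 i0}. y (E t0 i0 j) * u j)"
proof -
  have "(\<Sum>(t,i,j)\<in>T. y (E t i j) * (ev t0 i0 u (E t i j) + hv c1 c2 (E t i j)))
      = (\<Sum>(t,i,j)\<in>T. if t = t0 \<and> i = i0 then y (E t0 i0 j) * u j else 0)"
    by (intro sum.cong refl) (auto simp: T_mem)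
  then show ?thesis by (simp add: LG_def sum_T_block[OF assms])
qed

lemma RE_noF: "(\<And>t i j. \<eta> (F t i j) = 0) \<Longrightarrow> RE N p n \<alpha> \<beta> y t i j \<eta> = 0"
  by (simp add: RE_def)

lemma RE_fv: assumes "(t0, i0) \<in> TI"
  shows "RE N p n \<alpha> \<beta> y t i j (fv t0 i0 w) = (if t = t0 \<and> i = i0 then (\<Sum>k\<in>{1..n t0 i0}. w k * bev \<alpha> \<beta> (E t0 i0 j) (F t0 i0 k) y) else 0)"
proof (cases "t = t0 \<and> i = i0")
  case True
  have "RE N p n \<alpha> \<beta> y t i j (fv t0 i0 w) = (\<Sum>(t',i',k)\<in>T. if t' = t0 \<and> i' = i0 then w k * bev \<alpha> \<beta> (E t0 i0 j) (F t0 i0 k) y else 0)"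
    unfolding RE_def using True by (intro sum.cong refl) (auto simp: T_mem)
  then show ?thesis using True by (simp add: sum_T_block[OF assms])
next
  case False
  have "RE N p n \<alpha> \<beta> y t i j (fv t0 i0 w) = 0"
    unfolding RE_def using False by (intro sum.neutral) auto
  then show ?thesis using False by (simp only: if_False)
qed

lemma Q_zero: "\<xi> G = 0 \<Longrightarrow> (\<And>t i j. \<xi> (E t i j) = 0) \<Longrightarrow> Q y \<xi> \<eta> = 0"
  by (simp add: Qf_expand)

lemma Q_G: "Q y (unit_vec G) \<eta> = LG N p n y \<eta>"
  by (simp add: Qf_expand)

lemma Q_ev: assumes "(t0, i0) \<in> TI"
  shows "Q y (\<lambda>l. ev t0 i0 u l + hv c1 c2 l) \<eta> = (\<Sum>j\<in>{1..n t0 i0}. u j * RE N p n \<alpha> \<beta> y t0 i0 j \<eta>)"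
proof -
  have "(\<Sum>(t,i,j)\<in>T. (ev t0 i0 u (E t i j) + hv c1 c2 (E t i j)) * RE N p n \<alpha> \<beta> y t i j \<eta>)
     = (\<Sum>(t,i,j)\<in>T. if t = t0 \<and> i = i0 then u j * RE N p n \<alpha> \<beta> y t0 i0 j \<eta> else 0)"
    by (intro sum.cong refl) (auto simp: T_mem)
  then show ?thesis by (simp add: Qf_expand sum_T_block[OF assms])
qed

end


lemma conv_lemma:
  fixes U V P :: "complex fps"
  assumes m: "m \<ge> 1"
  shows "(\<Sum>j\<in>{1..m}. U $ (m - j) * (\<Sum>k\<in>{1..m}. V $ (k - 1) * (if k \<le> j then P $ (j - k) else 0)))
        = (U * V * P) $ (m - 1)"
proof -
  let ?g = "\<lambda>a b. U $ a * V $ b * P $ (m - Suc (a + b))"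
  have r1: "{1..m} = (\<lambda>a. m - a) ` {..<m}"
  proof
    show "{1..m} \<subseteq> (\<lambda>a. m - a) ` {..<m}"
    proof
      fix j assume "j \<in> {1..m}"
      then have "j = m - (m - j)" "m - j < m" by auto
      then show "j \<in> (\<lambda>a. m - a) ` {..<m}" by blast
    qed
  qed auto
  have r2: "{1..m} = Suc ` {..<m}"
    by (simp add: image_Suc_lessThan)
  have "(\<Sum>j\<in>{1..m}. U $ (m - j) * (\<Sum>k\<in>{1..m}. V $ (k - 1) * (if k \<le> j then P $ (j - k) else 0)))
      = (\<Sum>a<m. U $ (m - (m - a)) * (\<Sum>b<m. V $ (Suc b - 1) * (if Suc b \<le> m - a then P $ (m - a - Suc b) else 0)))"
  proof -
    have s1: "(\<Sum>j\<in>{1..m}. f j) = (\<Sum>a<m. f (m - a))" for f :: "nat \<Rightarrow> complex"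
      unfolding r1 by (subst sum.reindex) (auto simp: inj_on_def)
    have s2: "(\<Sum>k\<in>{1..m}. f k) = (\<Sum>b<m. f (Suc b))" for f :: "nat \<Rightarrow> complex"
      unfolding r2 by (subst sum.reindex) (auto simp: inj_on_def)
    show ?thesis by (subst s1, subst s2, rule refl)
  qed
  also have "\<dots> = (\<Sum>a<m. \<Sum>b<m. if a + b < m then ?g a b else 0)"
  proof (rule sum.cong[OF refl])
    fix a assume a: "a \<in> {..<m}"
    have ua: "U $ (m - (m - a)) = U $ a" using a by simp
    show "U $ (m - (m - a)) * (\<Sum>b<m. V $ (Suc b - 1) * (if Suc b \<le> m - a then P $ (m - a - Suc b) else 0))
        = (\<Sum>b<m. if a + b < m then ?g a b else 0)"
      unfolding ua sum_distrib_left
    proof (rule sum.cong[OF refl])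
      fix b assume "b \<in> {..<m}"
      have e1: "(Suc b \<le> m - a) = (a + b < m)" by arith
      have e2: "m - a - Suc b = m - Suc (a + b)" by simp
      show "U $ a * (V $ (Suc b - 1) * (if Suc b \<le> m - a then P $ (m - a - Suc b) else 0))
          = (if a + b < m then ?g a b else 0)"
        unfolding e1 e2 by (simp add: mult.assoc)
    qed
  qed
  also have "\<dots> = (\<Sum>(a,b)\<in>{..<m} \<times> {..<m}. if a + b < m then ?g a b else 0)"
    by (simp add: sum.cartesian_product)
  also have "\<dots> = (\<Sum>(a,b)\<in>{(a,b). a + b < m}. ?g a b)"
  proof -
    have "{(a,b). a + b < m} = {q \<in> {..<m} \<times> {..<m}. fst q + snd q < m}" by auto
    then show ?thesis by (simp add: sum.inter_filter case_prod_beta)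
  qed
  also have "\<dots> = (\<Sum>s<m. \<Sum>a\<le>s. ?g a (s - a))"
    by (rule sum.triangle_reindex)
  also have "\<dots> = (\<Sum>s<m. (\<Sum>a\<le>s. U $ a * V $ (s - a)) * P $ (m - 1 - s))"
  proof (rule sum.cong[OF refl])
    fix s assume "s \<in> {..<m}"
    show "(\<Sum>a\<le>s. ?g a (s - a)) = (\<Sum>a\<le>s. U $ a * V $ (s - a)) * P $ (m - 1 - s)"
      unfolding sum_distrib_right
    proof (rule sum.cong[OF refl])
      fix a assume "a \<in> {..s}"
      then have "m - Suc (a + (s - a)) = m - 1 - s" by auto
      then show "?g a (s - a) = U $ a * V $ (s - a) * P $ (m - 1 - s)" by simp
    qed
  qed
  also have "\<dots> = (\<Sum>s=0..m-1. (U * V) $ s * P $ (m - 1 - s))"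
  proof -
    have "{..<m} = {0..m-1}" using m by auto
    then show ?thesis by (simp add: fps_mult_nth atLeast0AtMost)
  qed
  also have "\<dots> = (U * V * P) $ (m - 1)" by (simp add: fps_mult_nth)
  finally show ?thesis .
qed


context jk0
begin

abbreviation "EE t i u c1 c2 \<equiv> (\<lambda>l. ev t i u l + hv c1 c2 l)"

lemma Q_hv: "Q y (hv c1 c2) \<eta> = 0" by (rule Q_zero) auto
lemma Q_fv: "Q y (fv t i w) \<eta> = 0" by (rule Q_zero) auto

lemma fA_GG: "fA y (unit_vec G) (unit_vec G) = 0"
  by (simp add: formA_Q Q_G LG_G)

lemma fA_GH: "fA y (unit_vec G) (hv c1 c2) = y H1 * c1 + y H2 * c2"
  by (simp add: formA_Q Q_G LG_hv Q_hv)

lemma fA_HG: "fA y (hv c1 c2) (unit_vec G) = - (y H1 * c1 + y H2 * c2)"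
  by (simp add: formA_Q Q_G LG_hv Q_hv)

lemma fA_GE: "(t,i) \<in> TI \<Longrightarrow> fA y (unit_vec G) (EE t i u c1 c2) = LG N p n y (EE t i u c1 c2)"
  by (simp add: formA_Q Q_G Q_ev RE_noF)

lemma fA_EG: "(t,i) \<in> TI \<Longrightarrow> fA y (EE t i u c1 c2) (unit_vec G) = - LG N p n y (EE t i u c1 c2)"
  by (simp add: formA_Q Q_G Q_ev RE_noF)

lemma fA_GF: "fA y (unit_vec G) (fv t i w) = 0"
  by (simp add: formA_Q Q_G LG_fv Q_fv)

lemma fA_FG: "fA y (fv t i w) (unit_vec G) = 0"
  by (simp add: formA_Q Q_G LG_fv Q_fv)

lemma fA_HH: "fA y (hv c1 c2) (hv d1 d2) = 0"
  by (simp add: formA_Q Q_hv)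

lemma fA_HE: "(t,i) \<in> TI \<Longrightarrow> fA y (hv d1 d2) (EE t i u c1 c2) = 0"
  by (simp add: formA_Q Q_hv Q_ev RE_noF)

lemma fA_EH: "(t,i) \<in> TI \<Longrightarrow> fA y (EE t i u c1 c2) (hv d1 d2) = 0"
  by (simp add: formA_Q Q_hv Q_ev RE_noF)

lemma fA_HF: "fA y (hv d1 d2) (fv t i w) = 0"
  by (simp add: formA_Q Q_hv Q_fv)

lemma fA_FH: "fA y (fv t i w) (hv d1 d2) = 0"
  by (simp add: formA_Q Q_hv Q_fv)

lemma fA_EE: "(t,i) \<in> TI \<Longrightarrow> (t',i') \<in> TI \<Longrightarrow> fA y (EE t i u c1 c2) (EE t' i' u' c1' c2') = 0"
  by (simp add: formA_Q Q_ev RE_noF)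

lemma fA_FF: "fA y (fv t i w) (fv t' i' w') = 0"
  by (simp add: formA_Q Q_fv)

lemma fA_EF: "(t,i) \<in> TI \<Longrightarrow> (t',i') \<in> TI \<Longrightarrow> fA y (EE t i u c1 c2) (fv t' i' w) =
   (if t = t' \<and> i = i' then (\<Sum>j\<in>{1..n t i}. u j * (\<Sum>k\<in>{1..n t i}. w k * bev \<alpha> \<beta> (E t i j) (F t i k) y)) else 0)"
  by (cases "t = t' \<and> i = i'") (auto simp: formA_Q Q_ev Q_fv RE_fv)

lemma fA_FE: "(t,i) \<in> TI \<Longrightarrow> (t',i') \<in> TI \<Longrightarrow> fA y (fv t' i' w) (EE t i u c1 c2) =
   - (if t = t' \<and> i = i' then (\<Sum>j\<in>{1..n t i}. u j * (\<Sum>k\<in>{1..n t i}. w k * bev \<alpha> \<beta> (E t i j) (F t i k) y)) else 0)"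
  by (cases "t = t' \<and> i = i'") (auto simp: formA_Q Q_ev Q_fv RE_fv)

end


context jk0
begin

definition yt :: "(gidx \<Rightarrow> complex) \<Rightarrow> nat \<Rightarrow> complex" where
  "yt y t = \<alpha> t * y H1 + \<beta> t * y H2"

definition py :: "(gidx \<Rightarrow> complex) \<Rightarrow> nat \<Rightarrow> nat \<Rightarrow> complex fps" where
  "py y t i = Abs_fps (\<lambda>d. if d = 0 then yt y t else y (E t i d))"

definition spec :: "complex fps \<Rightarrow> complex fps \<Rightarrow> nat \<Rightarrow> (nat \<Rightarrow> complex fps) \<Rightarrow> (nat \<Rightarrow> complex fps) \<Rightarrow> bool" where
  "spec Px Pa m U V \<longleftrightarrow> (\<forall>r<m. \<forall>s<m. (U r * V s * Pa) $ (m - 1) = (if r = s then 1 else 0) \<and>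
     (U r * V s * Px) $ (m - 1) = (if r = s then Px $ 0 / Pa $ 0 else 0) + (if s = r + 1 then 1 else 0))"

definition UV :: "(gidx \<Rightarrow> complex) \<Rightarrow> (gidx \<Rightarrow> complex) \<Rightarrow> nat \<Rightarrow> nat \<Rightarrow> (nat \<Rightarrow> complex fps) \<times> (nat \<Rightarrow> complex fps)" where
  "UV x a t i = (SOME q. spec (py x t i) (py a t i) (n t i) (fst q) (snd q))"

definition Dx :: "(gidx \<Rightarrow> complex) \<Rightarrow> (gidx \<Rightarrow> complex) \<Rightarrow> complex" where
  "Dx x a = x H1 * a H2 - x H2 * a H1"

definition v0 where "v0 x a = hv (a H2 / Dx x a) (- a H1 / Dx x a)"
definition v1 where "v1 x a = hv (- x H2 / Dx x a) (x H1 / Dx x a)"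

definition ucf where "ucf x a t i r = (\<lambda>j. fst (UV x a t i) r $ (n t i - j))"
definition wcf where "wcf x a t i s = (\<lambda>k. snd (UV x a t i) s $ (k - 1))"
definition Sy where "Sy y x a t i r = (\<Sum>j\<in>{1..n t i}. y (E t i j) * ucf x a t i r j)"
definition cc1 where "cc1 x a t i r = - Sy x x a t i r * (a H2 / Dx x a) + Sy a x a t i r * (x H2 / Dx x a)"
definition cc2 where "cc2 x a t i r = Sy x x a t i r * (a H1 / Dx x a) - Sy a x a t i r * (x H1 / Dx x a)"
definition esd where "esd x a t i r = EE t i (ucf x a t i r) (cc1 x a t i r) (cc2 x a t i r)"
definition fsd where "fsd x a t i s = fv t i (wcf x a t i s)"

lemma py_nth: "py y t i $ d = (if d = 0 then yt y t else y (E t i d))"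
  by (simp add: py_def)

lemma spec_UV:
  assumes "yt a t \<noteq> 0" "x (E t i 1) * yt a t - a (E t i 1) * yt x t \<noteq> 0"
  shows "spec (py x t i) (py a t i) (n t i) (fst (UV x a t i)) (snd (UV x a t i))"
proof -
  have "\<exists>U V. spec (py x t i) (py a t i) (n t i) U V"
    unfolding spec_def using assms
    by (intro block_exists) (simp_all add: py_nth)
  then have "\<exists>q. spec (py x t i) (py a t i) (n t i) (fst q) (snd q)" by auto
  then show ?thesis unfolding UV_def by (rule someI_ex)
qed

lemma bev_py: "1 \<le> j \<Longrightarrow> 1 \<le> k \<Longrightarrow> bev \<alpha> \<beta> (E t i j) (F t i k) y = (if k \<le> j then py y t i $ (j - k) else 0)"
  by (auto simp: py_nth yt_def)

lemma pairing:
  assumes "n t i \<ge> 1"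
  shows "(\<Sum>j\<in>{1..n t i}. ucf x a t i r j * (\<Sum>k\<in>{1..n t i}. wcf x a t i s k * bev \<alpha> \<beta> (E t i j) (F t i k) y))
    = (fst (UV x a t i) r * snd (UV x a t i) s * py y t i) $ (n t i - 1)"
proof -
  have "(\<Sum>j\<in>{1..n t i}. ucf x a t i r j * (\<Sum>k\<in>{1..n t i}. wcf x a t i s k * bev \<alpha> \<beta> (E t i j) (F t i k) y))
     = (\<Sum>j\<in>{1..n t i}. fst (UV x a t i) r $ (n t i - j) * (\<Sum>k\<in>{1..n t i}. snd (UV x a t i) s $ (k - 1) *
          (if k \<le> j then py y t i $ (j - k) else 0)))"
  proof (intro sum.cong refl)
    fix j assume j: "j \<in> {1..n t i}"
    have "(\<Sum>k\<in>{1..n t i}. wcf x a t i s k * bev \<alpha> \<beta> (E t i j) (F t i k) y)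
      = (\<Sum>k\<in>{1..n t i}. snd (UV x a t i) s $ (k - 1) * (if k \<le> j then py y t i $ (j - k) else 0))"
      by (intro sum.cong refl) (use j in \<open>auto simp: wcf_def py_nth yt_def\<close>)
    then show "ucf x a t i r j * (\<Sum>k\<in>{1..n t i}. wcf x a t i s k * bev \<alpha> \<beta> (E t i j) (F t i k) y)
      = fst (UV x a t i) r $ (n t i - j) * (\<Sum>k\<in>{1..n t i}. snd (UV x a t i) s $ (k - 1) * (if k \<le> j then py y t i $ (j - k) else 0))"
      by (simp add: ucf_def)
  qed
  also have "\<dots> = (fst (UV x a t i) r * snd (UV x a t i) s * py y t i) $ (n t i - 1)"
    by (rule conv_lemma[OF assms])
  finally show ?thesis .
qed

lemma cramer1: fixes x1 x2 a1 a2 S1 S2 :: complex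
  assumes "x1 * a2 - x2 * a1 \<noteq> 0"
  shows "x1 * (- S1 * (a2 / (x1*a2 - x2*a1)) + S2 * (x2 / (x1*a2 - x2*a1))) + x2 * (S1 * (a1 / (x1*a2 - x2*a1)) - S2 * (x1 / (x1*a2 - x2*a1))) = - S1"
    and "a1 * (- S1 * (a2 / (x1*a2 - x2*a1)) + S2 * (x2 / (x1*a2 - x2*a1))) + a2 * (S1 * (a1 / (x1*a2 - x2*a1)) - S2 * (x1 / (x1*a2 - x2*a1))) = - S2"
proof -
  let ?D = "x1*a2 - x2*a1"
  have "x1 * (- S1 * (a2 / ?D) + S2 * (x2 / ?D)) + x2 * (S1 * (a1 / ?D) - S2 * (x1 / ?D)) = (- S1 * ?D) / ?D"
    by (simp add: algebra_simps add_divide_distrib diff_divide_distrib)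
  then show "x1 * (- S1 * (a2 / ?D) + S2 * (x2 / ?D)) + x2 * (S1 * (a1 / ?D) - S2 * (x1 / ?D)) = - S1"
    using assms by simp
  have "a1 * (- S1 * (a2 / ?D) + S2 * (x2 / ?D)) + a2 * (S1 * (a1 / ?D) - S2 * (x1 / ?D)) = (- S2 * ?D) / ?D"
    by (simp add: algebra_simps add_divide_distrib diff_divide_distrib)
  then show "a1 * (- S1 * (a2 / ?D) + S2 * (x2 / ?D)) + a2 * (S1 * (a1 / ?D) - S2 * (x1 / ?D)) = - S2"
    using assms by simp
qed

lemma LG_esd_x: assumes "Dx x a \<noteq> 0" "(t,i) \<in> TI"
  shows "LG N p n x (esd x a t i r) = 0"
proof -
  have "LG N p n x (esd x a t i r) = x H1 * cc1 x a t i r + x H2 * cc2 x a t i r + Sy x x a t i r"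
    unfolding esd_def by (simp add: LG_ev[OF assms(2)] Sy_def)
  also have "\<dots> = 0" using cramer1(1)[of "x H1" "a H2" "x H2" "a H1" "Sy x x a t i r" "Sy a x a t i r"] assms(1)
    by (simp add: cc1_def cc2_def Dx_def)
  finally show ?thesis .
qed

lemma LG_esd_a: assumes "Dx x a \<noteq> 0" "(t,i) \<in> TI"
  shows "LG N p n a (esd x a t i r) = 0"
proof -
  have "LG N p n a (esd x a t i r) = a H1 * cc1 x a t i r + a H2 * cc2 x a t i r + Sy a x a t i r"
    unfolding esd_def by (simp add: LG_ev[OF assms(2)] Sy_def)
  also have "\<dots> = 0" using cramer1(2)[of "x H1" "a H2" "x H2" "a H1" "Sy x x a t i r" "Sy a x a t i r"] assms(1)
    by (simp add: cc1_def cc2_def Dx_def)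
  finally show ?thesis .
qed

end


context jk0
begin

lemma TI_Sigma: "TI = Sigma {1..N} (\<lambda>t. {1..p t})"
  by (auto simp: TI_def)

lemma finite_TI: "finite TI"
  by (simp add: TI_Sigma)

definition L :: "(nat \<times> nat) list" where
  "L = (SOME l. distinct l \<and> set l = TI)"

lemma L_prop: "distinct L \<and> set L = TI"
  unfolding L_def by (rule someI_ex) (use finite_distinct_list[OF finite_TI] in auto)

lemma set_L: "set L = TI" using L_prop by simp
lemma distinct_L: "distinct L" using L_prop by simp

definition lamf where "lamf x a t = Some (yt x t / yt a t)"

definition bl where "bl x a = Kron 2 # map (\<lambda>(t,i). Jor (lamf x a t) (n t i)) L"

definition eb :: "(gidx \<Rightarrow> complex) \<Rightarrow> (gidx \<Rightarrow> complex) \<Rightarrow> nat \<times> nat \<Rightarrow> gidx \<Rightarrow> complex" where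
  "eb x a q = (if fst q = 0 then (if snd q = 0 then unit_vec G else if snd q = 1 then v0 x a else v1 x a)
     else (if snd q < n (fst (L ! (fst q - 1))) (snd (L ! (fst q - 1)))
           then esd x a (fst (L ! (fst q - 1))) (snd (L ! (fst q - 1))) (snd q)
           else fsd x a (fst (L ! (fst q - 1))) (snd (L ! (fst q - 1))) (snd q - n (fst (L ! (fst q - 1))) (snd (L ! (fst q - 1))))))"

lemma length_bl: "length (bl x a) = Suc (length L)" by (simp add: bl_def)

lemma bl_0: "bl x a ! 0 = Kron 2" by (simp add: bl_def)

lemma bl_Suc: "b < length L \<Longrightarrow> bl x a ! Suc b = Jor (lamf x a (fst (L ! b))) (n (fst (L ! b)) (snd (L ! b)))"
  by (simp add: bl_def case_prod_beta)

lemma kronA: "r < 3 \<Longrightarrow> r' < 3 \<Longrightarrow> blockA (Kron 2) r r' = (if r = 0 \<and> r' = 1 then 1 else if r = 1 \<and> r' = 0 then -1 else 0)"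
  by (auto simp: skew_blk_def P_cell_def)

lemma kronB: "r < 3 \<Longrightarrow> r' < 3 \<Longrightarrow> blockB (Kron 2) r r' = (if r = 0 \<and> r' = 2 then 1 else if r = 2 \<and> r' = 0 then -1 else 0)"
  by (auto simp: skew_blk_def Q_cell_def)

definition good where
  "good x a \<longleftrightarrow> Dx x a \<noteq> 0 \<and> (\<forall>t\<in>{1..N}. yt a t \<noteq> 0) \<and>
     (\<forall>(t,i)\<in>TI. x (E t i 1) * yt a t - a (E t i 1) * yt x t \<noteq> 0)"

lemma kron_vals:
  assumes "Dx x a \<noteq> 0" "r < 3" "r' < 3"
  shows "fA x (eb x a (0,r)) (eb x a (0,r')) = blockA (Kron 2) r r' \<and>
         fA a (eb x a (0,r)) (eb x a (0,r')) = blockB (Kron 2) r r'"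
proof -
  have r: "r = 0 \<or> r = 1 \<or> r = 2" "r' = 0 \<or> r' = 1 \<or> r' = 2" using assms by auto
  show ?thesis
    using r
    by (auto simp: eb_def v0_def v1_def fA_GG fA_GH fA_HG fA_HH skew_blk_def P_cell_def Q_cell_def
      diff_divide_distrib[symmetric]) (use assms(1) in \<open>simp_all add: Dx_def algebra_simps\<close>)
qed

end


locale jk = jk0 +
  assumes hnTI: "\<And>t i. (t,i) \<in> TI \<Longrightarrow> n t i \<ge> 1"
begin

lemma eb_0: "eb x a (0, r) = (if r = 0 then unit_vec G else if r = 1 then v0 x a else v1 x a)"
  by (simp add: eb_def)

lemma eb_Suc: "L ! b = (t,i) \<Longrightarrow> eb x a (Suc b, r) = (if r < n t i then esd x a t i r else fsd x a t i (r - n t i))"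
  by (simp add: eb_def)

lemma L_TI: "b < length L \<Longrightarrow> L ! b = (t,i) \<Longrightarrow> (t,i) \<in> TI"
  using set_L nth_mem by metis

lemma zero_KJ:
  assumes g: "Dx x a \<noteq> 0" and ti: "(t,i) \<in> TI" and r: "r < 3" and y: "y = x \<or> y = a"
  shows "fA y (eb x a (0,r)) (esd x a t i r') = 0" "fA y (esd x a t i r') (eb x a (0,r)) = 0"
    "fA y (eb x a (0,r)) (fsd x a t i s) = 0" "fA y (fsd x a t i s) (eb x a (0,r)) = 0"
proof -
  have LG0: "LG N p n y (esd x a t i r') = 0" using y LG_esd_x[OF g ti] LG_esd_a[OF g ti] by auto
  have "r = 0 \<or> r = 1 \<or> r = 2" using r by auto
  then show "fA y (eb x a (0,r)) (esd x a t i r') = 0" "fA y (esd x a t i r') (eb x a (0,r)) = 0"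
    "fA y (eb x a (0,r)) (fsd x a t i s) = 0" "fA y (fsd x a t i s) (eb x a (0,r)) = 0"
    using LG0 unfolding esd_def fsd_def
    by (auto simp: eb_0 v0_def v1_def fA_GE[OF ti] fA_EG[OF ti] fA_GF fA_FG fA_HE[OF ti] fA_EH[OF ti] fA_HF fA_FH)
qed

lemma JJ:
  assumes ti: "(t,i) \<in> TI" and ti': "(t',i') \<in> TI"
  shows "fA y (esd x a t i r) (esd x a t' i' r') = 0"
    "fA y (fsd x a t i s) (fsd x a t' i' s') = 0"
    "fA y (esd x a t i r) (fsd x a t' i' s) = (if t = t' \<and> i = i' then (fst (UV x a t i) r * snd (UV x a t i) s * py y t i) $ (n t i - 1) else 0)"
    "fA y (fsd x a t' i' s) (esd x a t i r) = - (if t = t' \<and> i = i' then (fst (UV x a t i) r * snd (UV x a t i) s * py y t i) $ (n t i - 1) else 0)"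
proof -
  show "fA y (esd x a t i r) (esd x a t' i' r') = 0" unfolding esd_def by (rule fA_EE[OF ti ti'])
  show "fA y (fsd x a t i s) (fsd x a t' i' s') = 0" unfolding fsd_def by (rule fA_FF)
  show "fA y (esd x a t i r) (fsd x a t' i' s) = (if t = t' \<and> i = i' then (fst (UV x a t i) r * snd (UV x a t i) s * py y t i) $ (n t i - 1) else 0)"
  proof (cases "t = t' \<and> i = i'")
    case True
    then show ?thesis unfolding esd_def fsd_def fA_EF[OF ti ti'] using pairing[OF hnTI[OF ti], of x a r s y]
      by (elim conjE) simp
  next
    case False
    then show ?thesis unfolding esd_def fsd_def fA_EF[OF ti ti'] by (simp only: if_False)
  qed
  show "fA y (fsd x a t' i' s) (esd x a t i r) = - (if t = t' \<and> i = i' then (fst (UV x a t i) r * snd (UV x a t i) s * py y t i) $ (n t i - 1) else 0)"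
  proof (cases "t = t' \<and> i = i'")
    case True
    then show ?thesis unfolding esd_def fsd_def fA_FE[OF ti ti'] using pairing[OF hnTI[OF ti], of x a r s y]
      by (elim conjE) simp
  next
    case False
    then show ?thesis unfolding esd_def fsd_def fA_FE[OF ti ti'] by (simp only: if_False)
  qed
qed

lemma spec_vals:
  assumes g: "good x a" and ti: "(t,i) \<in> TI" and r: "r < n t i" and s: "s < n t i"
  shows "(fst (UV x a t i) r * snd (UV x a t i) s * py a t i) $ (n t i - 1) = id_cell r s"
    "(fst (UV x a t i) r * snd (UV x a t i) s * py x t i) $ (n t i - 1) = jordan_cell (yt x t / yt a t) r s"
proof -
  have t: "t \<in> {1..N}" using ti by (auto simp: TI_def)
  have sp: "spec (py x t i) (py a t i) (n t i) (fst (UV x a t i)) (snd (UV x a t i))"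
    using g ti t by (intro spec_UV) (auto simp: good_def)
  show "(fst (UV x a t i) r * snd (UV x a t i) s * py a t i) $ (n t i - 1) = id_cell r s"
    using sp r s by (simp add: spec_def id_cell_def)
  show "(fst (UV x a t i) r * snd (UV x a t i) s * py x t i) $ (n t i - 1) = jordan_cell (yt x t / yt a t) r s"
    using sp r s by (auto simp: spec_def jordan_cell_def py_nth)
qed

end


context jk
begin

lemma block_dim_bl: "b < length L \<Longrightarrow> L ! b = (t,i) \<Longrightarrow> block_dim (bl x a ! Suc b) = 2 * n t i"
  by (simp add: bl_Suc)

lemma JKP:
  assumes g: "good x a" and b: "b < length (bl x a)" and r: "r < block_dim (bl x a ! b)"
    and b': "b' < length (bl x a)" and r': "r' < block_dim (bl x a ! b')"
  shows "fA x (eb x a (b,r)) (eb x a (b',r')) = (if b = b' then blockA (bl x a ! b) r r' else 0) \<and>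
         fA a (eb x a (b,r)) (eb x a (b',r')) = (if b = b' then blockB (bl x a ! b) r r' else 0)"
proof -
  have D: "Dx x a \<noteq> 0" using g by (simp add: good_def)
  show ?thesis
  proof (cases b)
    case 0
    then have r3: "r < 3" using r by (simp add: bl_0)
    show ?thesis
    proof (cases b')
      case 0
      then show ?thesis using kron_vals[OF D r3] r' \<open>b = 0\<close> by (simp add: bl_0)
    next
      case (Suc b2)
      obtain t' i' where L2: "L ! b2 = (t',i')" by fastforce
      have b2: "b2 < length L" using b' Suc by (simp add: length_bl)
      have ti': "(t',i') \<in> TI" using L_TI[OF b2 L2] .
      show ?thesis using zero_KJ[OF D ti' r3] \<open>b = 0\<close> Suc by (simp add: eb_Suc[OF L2])
    qed
  next
    case (Suc b1)
    obtain t i where L1: "L ! b1 = (t,i)" by fastforce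
    have b1: "b1 < length L" using b Suc by (simp add: length_bl)
    have ti: "(t,i) \<in> TI" using L_TI[OF b1 L1] .
    have rr: "r < 2 * n t i" using r Suc block_dim_bl[OF b1 L1] by simp
    show ?thesis
    proof (cases b')
      case 0
      then have r3: "r' < 3" using r' by (simp add: bl_0)
      show ?thesis using zero_KJ[OF D ti r3] \<open>b' = 0\<close> Suc by (simp add: eb_Suc[OF L1])
    next
      case (Suc b2)
      obtain t' i' where L2: "L ! b2 = (t',i')" by fastforce
      have b2: "b2 < length L" using b' Suc by (simp add: length_bl)
      have ti': "(t',i') \<in> TI" using L_TI[OF b2 L2] .
      have rr': "r' < 2 * n t' i'" using r' Suc block_dim_bl[OF b2 L2] by simp
      show ?thesis
      proof (cases "b1 = b2")
        case False
        have ne: "(t,i) \<noteq> (t',i')"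
          using False distinct_L b1 b2 L1 L2 nth_eq_iff_index_eq by metis
        then show ?thesis using \<open>b = Suc b1\<close> \<open>b' = Suc b2\<close> False
          by (auto simp: eb_Suc[OF L1] eb_Suc[OF L2] JJ[OF ti ti'] JJ[OF ti' ti])
      next
        case True
        then have tt: "t' = t" "i' = i" using L1 L2 by auto
        let ?m = "n t i"
        have blk: "bl x a ! b = Jor (Some (yt x t / yt a t)) ?m" using \<open>b = Suc b1\<close> b1 L1 by (simp add: bl_Suc lamf_def)
        have rr2: "r' < 2 * ?m" using rr' tt by simp
        have ebb: "eb x a (b,q) = (if q < ?m then esd x a t i q else fsd x a t i (q - ?m))" for q
          using \<open>b = Suc b1\<close> eb_Suc[OF L1] by simp
        have ebb': "eb x a (b',q) = (if q < ?m then esd x a t i q else fsd x a t i (q - ?m))" for q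
          using \<open>b' = Suc b2\<close> True eb_Suc[OF L1] by simp
        have bb: "b = b'" using \<open>b = Suc b1\<close> \<open>b' = Suc b2\<close> True by simp
        show ?thesis
        proof (cases "r < ?m"; cases "r' < ?m")
          assume "r < ?m" "r' < ?m"
          then show ?thesis using bb blk
            by (simp add: ebb ebb' JJ[OF ti ti] skew_blk_def)
        next
          assume a1: "r < ?m" "\<not> r' < ?m"
          then have "r' - ?m < ?m" using rr2 by simp
          then show ?thesis using a1 bb blk spec_vals[OF g ti a1(1)]
            by (simp add: ebb ebb' JJ[OF ti ti] skew_blk_def)
        next
          assume a1: "\<not> r < ?m" "r' < ?m"
          then have "r - ?m < ?m" using rr by simp
          then show ?thesis using a1 bb blk spec_vals[OF g ti a1(2)]
            by (simp add: ebb ebb' JJ[OF ti ti] skew_blk_def)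
        next
          assume a1: "\<not> r < ?m" "\<not> r' < ?m"
          then show ?thesis using bb blk
            by (simp add: ebb ebb' JJ[OF ti ti] skew_blk_def)
        qed
      qed
    qed
  qed
qed

end


lemma Qf_lin1: "Qf N p n \<alpha> \<beta> y (\<lambda>k. \<Sum>s\<in>S. c s * f s k) \<eta> = (\<Sum>s\<in>S. c s * Qf N p n \<alpha> \<beta> y (f s) \<eta>)"
proof -
  let ?I = "gI N p n"
  have "Qf N p n \<alpha> \<beta> y (\<lambda>k. \<Sum>s\<in>S. c s * f s k) \<eta> = (\<Sum>a\<in>?I. \<Sum>b\<in>?I. \<Sum>s\<in>S. c s * (f s a * \<eta> b * bev \<alpha> \<beta> a b y))"
    unfolding Qf_def by (intro sum.cong refl) (simp add: sum_distrib_right mult.assoc)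
  also have "\<dots> = (\<Sum>a\<in>?I. \<Sum>s\<in>S. \<Sum>b\<in>?I. c s * (f s a * \<eta> b * bev \<alpha> \<beta> a b y))"
    by (rule sum.cong[OF refl], rule sum.swap)
  also have "\<dots> = (\<Sum>s\<in>S. \<Sum>a\<in>?I. \<Sum>b\<in>?I. c s * (f s a * \<eta> b * bev \<alpha> \<beta> a b y))"
    by (rule sum.swap)
  also have "\<dots> = (\<Sum>s\<in>S. c s * Qf N p n \<alpha> \<beta> y (f s) \<eta>)"
    by (simp add: Qf_def sum_distrib_left)
  finally show ?thesis .
qed

lemma Qf_lin2: "Qf N p n \<alpha> \<beta> y \<xi> (\<lambda>k. \<Sum>s\<in>S. c s * f s k) = (\<Sum>s\<in>S. c s * Qf N p n \<alpha> \<beta> y \<xi> (f s))"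
proof -
  let ?I = "gI N p n"
  have "Qf N p n \<alpha> \<beta> y \<xi> (\<lambda>k. \<Sum>s\<in>S. c s * f s k) = (\<Sum>a\<in>?I. \<Sum>b\<in>?I. \<Sum>s\<in>S. c s * (\<xi> a * f s b * bev \<alpha> \<beta> a b y))"
    unfolding Qf_def by (intro sum.cong refl) (simp add: sum_distrib_right sum_distrib_left mult_ac)
  also have "\<dots> = (\<Sum>a\<in>?I. \<Sum>s\<in>S. \<Sum>b\<in>?I. c s * (\<xi> a * f s b * bev \<alpha> \<beta> a b y))"
    by (rule sum.cong[OF refl], rule sum.swap)
  also have "\<dots> = (\<Sum>s\<in>S. \<Sum>a\<in>?I. \<Sum>b\<in>?I. c s * (\<xi> a * f s b * bev \<alpha> \<beta> a b y))"
    by (rule sum.swap)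
  also have "\<dots> = (\<Sum>s\<in>S. c s * Qf N p n \<alpha> \<beta> y \<xi> (f s))"
    by (simp add: Qf_def sum_distrib_left)
  finally show ?thesis .
qed

lemma formA_lin1: "formA N p n \<alpha> \<beta> y (\<lambda>k. \<Sum>s\<in>S. c s * f s k) \<eta> = (\<Sum>s\<in>S. c s * formA N p n \<alpha> \<beta> y (f s) \<eta>)"
  by (simp add: formA_Q Qf_lin1 Qf_lin2 sum_subtractf right_diff_distrib)

lemma formA_lin2: "formA N p n \<alpha> \<beta> y \<xi> (\<lambda>k. \<Sum>s\<in>S. c s * f s k) = (\<Sum>s\<in>S. c s * formA N p n \<alpha> \<beta> y \<xi> (f s))"
  by (simp add: formA_Q Qf_lin1 Qf_lin2 sum_subtractf right_diff_distrib)

lemma formA_zero1: "formA N p n \<alpha> \<beta> y (\<lambda>_. 0) \<eta> = 0"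
  using formA_lin1[where S="{}"] by simp

lemma formA_zero2: "formA N p n \<alpha> \<beta> y \<xi> (\<lambda>_. 0) = 0"
  using formA_lin2[where S="{}"] by simp

context jk
begin

definition SS where "SS x a = {(b, i). b < length (bl x a) \<and> i < block_dim (bl x a ! b)}"

lemma finite_SS: "finite (SS x a)"
proof -
  have "SS x a = Sigma {..<length (bl x a)} (\<lambda>b. {..<block_dim (bl x a ! b)})" by (auto simp: SS_def)
  then show ?thesis by simp
qed

lemma SS_fiber: "b' < length (bl x a) \<Longrightarrow> {s \<in> SS x a. fst s = b'} = Pair b' ` {..<block_dim (bl x a ! b')}"
  by (auto simp: SS_def)

lemma sum_SS_fiber:
  assumes "b' < length (bl x a)"
  shows "(\<Sum>s\<in>SS x a. if fst s = b' then g (snd s) else 0) = (\<Sum>r<block_dim (bl x a ! b'). g r)"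
proof -
  have "(\<Sum>s\<in>SS x a. if fst s = b' then g (snd s) else 0) = (\<Sum>s\<in>{s \<in> SS x a. fst s = b'}. g (snd s))"
    using finite_SS by (simp add: sum.inter_filter)
  also have "\<dots> = (\<Sum>r<block_dim (bl x a ! b'). g r)"
    unfolding SS_fiber[OF assms] by (subst sum.reindex) (auto simp: inj_on_def)
  finally show ?thesis .
qed

lemma col_sum:
  assumes g: "good x a" and s': "s' \<in> SS x a"
  shows "fA x (\<lambda>k. \<Sum>s\<in>SS x a. c s * eb x a s k) (eb x a s') = (\<Sum>r<block_dim (bl x a ! fst s'). c (fst s', r) * blockA (bl x a ! fst s') r (snd s'))"
    "fA a (\<lambda>k. \<Sum>s\<in>SS x a. c s * eb x a s k) (eb x a s') = (\<Sum>r<block_dim (bl x a ! fst s'). c (fst s', r) * blockB (bl x a ! fst s') r (snd s'))"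
    "fA x (eb x a s') (\<lambda>k. \<Sum>s\<in>SS x a. c s * eb x a s k) = (\<Sum>r<block_dim (bl x a ! fst s'). c (fst s', r) * blockA (bl x a ! fst s') (snd s') r)"
    "fA a (eb x a s') (\<lambda>k. \<Sum>s\<in>SS x a. c s * eb x a s k) = (\<Sum>r<block_dim (bl x a ! fst s'). c (fst s', r) * blockB (bl x a ! fst s') (snd s') r)"
proof -
  have s'b: "fst s' < length (bl x a)" "snd s' < block_dim (bl x a ! fst s')" using s' by (auto simp: SS_def)
  have J: "\<And>s. s \<in> SS x a \<Longrightarrow> fA x (eb x a s) (eb x a s') = (if fst s = fst s' then blockA (bl x a ! fst s') (snd s) (snd s') else 0)
      \<and> fA a (eb x a s) (eb x a s') = (if fst s = fst s' then blockB (bl x a ! fst s') (snd s) (snd s') else 0)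
      \<and> fA x (eb x a s') (eb x a s) = (if fst s = fst s' then blockA (bl x a ! fst s') (snd s') (snd s) else 0)
      \<and> fA a (eb x a s') (eb x a s) = (if fst s = fst s' then blockB (bl x a ! fst s') (snd s') (snd s) else 0)"
  proof -
    fix s assume s: "s \<in> SS x a"
    then obtain b r where sb: "s = (b,r)" "b < length (bl x a)" "r < block_dim (bl x a ! b)" by (auto simp: SS_def)
    obtain b' r' where sb': "s' = (b',r')" by fastforce
    show "?thesis s"
      using JKP[OF g sb(2,3) s'b[unfolded sb']] JKP[OF g s'b[unfolded sb'] sb(2,3)] sb sb' by auto
  qed
  have sx: "(\<Sum>s\<in>SS x a. c s * fA y (eb x a s) (eb x a s')) = (\<Sum>r<block_dim (bl x a ! fst s'). c (fst s', r) * M r (snd s'))"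
    if hy: "\<And>s. s \<in> SS x a \<Longrightarrow> fA y (eb x a s) (eb x a s') = (if fst s = fst s' then M (snd s) (snd s') else 0)" for y M
  proof -
    have "(\<Sum>s\<in>SS x a. c s * fA y (eb x a s) (eb x a s')) = (\<Sum>s\<in>SS x a. if fst s = fst s' then c (fst s', snd s) * M (snd s) (snd s') else 0)"
      by (intro sum.cong refl) (auto simp: hy)
    also have "\<dots> = (\<Sum>r<block_dim (bl x a ! fst s'). c (fst s', r) * M r (snd s'))"
      by (rule sum_SS_fiber[OF s'b(1)])
    finally show ?thesis .
  qed
  have sy: "(\<Sum>s\<in>SS x a. c s * fA y (eb x a s') (eb x a s)) = (\<Sum>r<block_dim (bl x a ! fst s'). c (fst s', r) * M (snd s') r)"
    if hy: "\<And>s. s \<in> SS x a \<Longrightarrow> fA y (eb x a s') (eb x a s) = (if fst s = fst s' then M (snd s') (snd s) else 0)" for y M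
  proof -
    have "(\<Sum>s\<in>SS x a. c s * fA y (eb x a s') (eb x a s)) = (\<Sum>s\<in>SS x a. if fst s = fst s' then c (fst s', snd s) * M (snd s') (snd s) else 0)"
      by (intro sum.cong refl) (auto simp: hy)
    also have "\<dots> = (\<Sum>r<block_dim (bl x a ! fst s'). c (fst s', r) * M (snd s') r)"
      by (rule sum_SS_fiber[OF s'b(1)])
    finally show ?thesis .
  qed
  show "fA x (\<lambda>k. \<Sum>s\<in>SS x a. c s * eb x a s k) (eb x a s') = (\<Sum>r<block_dim (bl x a ! fst s'). c (fst s', r) * blockA (bl x a ! fst s') r (snd s'))"
    unfolding formA_lin1 by (rule sx) (use J in blast)
  show "fA a (\<lambda>k. \<Sum>s\<in>SS x a. c s * eb x a s k) (eb x a s') = (\<Sum>r<block_dim (bl x a ! fst s'). c (fst s', r) * blockB (bl x a ! fst s') r (snd s'))"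
    unfolding formA_lin1 by (rule sx) (use J in blast)
  show "fA x (eb x a s') (\<lambda>k. \<Sum>s\<in>SS x a. c s * eb x a s k) = (\<Sum>r<block_dim (bl x a ! fst s'). c (fst s', r) * blockA (bl x a ! fst s') (snd s') r)"
    unfolding formA_lin2 by (rule sy) (use J in blast)
  show "fA a (eb x a s') (\<lambda>k. \<Sum>s\<in>SS x a. c s * eb x a s k) = (\<Sum>r<block_dim (bl x a ! fst s'). c (fst s', r) * blockB (bl x a ! fst s') (snd s') r)"
    unfolding formA_lin2 by (rule sy) (use J in blast)
qed

end


lemma sum3: "(\<Sum>r<(3::nat). f r) = f 0 + f 1 + f 2"
  by (simp add: eval_nat_numeral)

context jk
begin

lemma uniq:
  assumes g: "good x a" and c0: "\<And>s. s \<notin> SS x a \<Longrightarrow> c s = 0"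
    and z: "(\<lambda>k. \<Sum>s\<in>SS x a. c s * eb x a s k) = (\<lambda>_. 0)"
  shows "\<forall>s\<in>SS x a. c s = 0"
proof
  fix s0 assume s0: "s0 \<in> SS x a"
  obtain b0 r0 where s0e: "s0 = (b0, r0)" by fastforce
  have b0: "b0 < length (bl x a)" and r0: "r0 < block_dim (bl x a ! b0)" using s0 s0e by (auto simp: SS_def)
  note cs = col_sum[OF g, of _ c, unfolded z formA_zero1 formA_zero2]
  show "c s0 = 0"
  proof (cases b0)
    case 0
    have bl0: "bl x a ! 0 = Kron 2" by (rule bl_0)
    have mem: "(0, q) \<in> SS x a" if "q < 3" for q using that by (auto simp: SS_def length_bl bl0)
    have r3: "r0 = 0 \<or> r0 = 1 \<or> r0 = 2" using r0 0 bl0 by auto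
    have A: "0 = c (0,0)" using cs(1)[OF mem[of 1]] by (simp add: bl0 sum3 skew_blk_def P_cell_def)
    have B: "0 = c (0,1)" using cs(3)[OF mem[of 0]] by (simp add: bl0 sum3 skew_blk_def P_cell_def)
    have C: "0 = c (0,2)" using cs(4)[OF mem[of 0]] by (simp add: bl0 sum3 skew_blk_def Q_cell_def)
    show ?thesis using r3 A B C s0e 0 by auto
  next
    case (Suc b1)
    obtain t i where L1: "L ! b1 = (t,i)" by fastforce
    have b1: "b1 < length L" using b0 Suc by (simp add: length_bl)
    let ?m = "n t i"
    have blk: "bl x a ! b0 = Jor (Some (yt x t / yt a t)) ?m" using Suc b1 L1 by (simp add: bl_Suc lamf_def)
    have dim: "block_dim (bl x a ! b0) = 2 * ?m" using blk by simp
    have mem: "(b0, q) \<in> SS x a" if "q < 2 * ?m" for q using that b0 dim by (auto simp: SS_def)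
    show ?thesis
    proof (cases "r0 < ?m")
      case True
      have "0 = (\<Sum>r<2 * ?m. c (b0, r) * skew_blk ?m id_cell r (r0 + ?m))"
        using cs(2)[OF mem[of "r0 + ?m"]] True by (simp add: blk)
      also have "\<dots> = (\<Sum>r<2 * ?m. if r = r0 then c (b0, r) else 0)"
        using True by (intro sum.cong refl) (auto simp: skew_blk_def id_cell_def)
      also have "\<dots> = c (b0, r0)" using True by simp
      finally show ?thesis using s0e by simp
    next
      case False
      have rm: "r0 - ?m < ?m" using r0 dim False by simp
      have "0 = (\<Sum>r<2 * ?m. c (b0, r) * skew_blk ?m id_cell r (r0 - ?m))"
        using cs(2)[OF mem[of "r0 - ?m"]] rm by (simp add: blk)
      also have "\<dots> = (\<Sum>r<2 * ?m. if r = r0 then - c (b0, r) else 0)"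
      proof (intro sum.cong refl)
        fix r assume "r \<in> {..<2 * ?m}"
        show "c (b0, r) * skew_blk ?m id_cell r (r0 - ?m) = (if r = r0 then - c (b0, r) else 0)"
        proof (cases "r = r0")
          case True
          then have "skew_blk ?m id_cell r (r0 - ?m) = -1" using False rm by (simp add: skew_blk_def id_cell_def)
          then show ?thesis using True by simp
        next
          case ne: False
          have "skew_blk ?m id_cell r (r0 - ?m) = 0" using False rm ne by (auto simp: skew_blk_def id_cell_def)
          then show ?thesis using ne by simp
        qed
      qed
      also have "\<dots> = - c (b0, r0)"
      proof -
        have "r0 < 2 * ?m" using r0 dim by simp
        then show ?thesis by simp
      qed
      finally show ?thesis using s0e by simp
    qed
  qed
qed

end


context jk
begin

lemma eb_in_V:
  assumes s: "s \<in> SS x a" and k: "k \<notin> I"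
  shows "eb x a s k = 0"
proof -
  obtain b r where sb: "s = (b,r)" "b < length (bl x a)" using s by (auto simp: SS_def)
  show ?thesis
  proof (cases b)
    case 0
    then show ?thesis using k sb
      by (cases k) (auto simp: eb_0 v0_def v1_def unit_vec_def)
  next
    case (Suc b1)
    obtain t i where L1: "L ! b1 = (t,i)" by fastforce
    have b1: "b1 < length L" using sb Suc by (simp add: length_bl)
    have ti: "(t,i) \<in> TI" using L_TI[OF b1 L1] .
    then show ?thesis using k sb Suc
      by (cases k) (auto simp: eb_Suc[OF L1] esd_def fsd_def TI_def)
  qed
qed

definition gmap :: "nat \<times> nat \<Rightarrow> gidx" where
  "gmap q = (if fst q = 0 then (if snd q = 0 then G else if snd q = 1 then H1 else H2)
     else (if snd q < n (fst (L ! (fst q - 1))) (snd (L ! (fst q - 1)))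
           then E (fst (L ! (fst q - 1))) (snd (L ! (fst q - 1))) (snd q + 1)
           else F (fst (L ! (fst q - 1))) (snd (L ! (fst q - 1))) (snd q - n (fst (L ! (fst q - 1))) (snd (L ! (fst q - 1))) + 1)))"

lemma I_gmap: "I \<subseteq> gmap ` SS x a"
proof
  fix k assume k: "k \<in> I"
  have m0: "(0, q) \<in> SS x a" if "q < 3" for q using that by (auto simp: SS_def length_bl bl_0)
  show "k \<in> gmap ` SS x a"
  proof (cases k)
    case G then show ?thesis using m0[of 0] by (force simp: gmap_def)
  next
    case H1 then show ?thesis using m0[of 1] by (force simp: gmap_def)
  next
    case H2 then show ?thesis using m0[of 2] by (force simp: gmap_def)
  next
    case (E t i j)
    have ti: "(t,i) \<in> TI" and j: "1 \<le> j" "j \<le> n t i" using k E by (auto simp: TI_def)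
    obtain b1 where b1: "b1 < length L" "L ! b1 = (t,i)" using ti set_L by (metis in_set_conv_nth)
    have "(Suc b1, j - 1) \<in> SS x a" using b1 j by (auto simp: SS_def length_bl bl_Suc)
    moreover have "gmap (Suc b1, j - 1) = k" using b1 j E by (auto simp: gmap_def)
    ultimately show ?thesis by force
  next
    case (F t i j)
    have ti: "(t,i) \<in> TI" and j: "1 \<le> j" "j \<le> n t i" using k F by (auto simp: TI_def)
    obtain b1 where b1: "b1 < length L" "L ! b1 = (t,i)" using ti set_L by (metis in_set_conv_nth)
    have "(Suc b1, n t i + j - 1) \<in> SS x a" using b1 j by (auto simp: SS_def length_bl bl_Suc)
    moreover have "gmap (Suc b1, n t i + j - 1) = k" using b1 j F by (auto simp: gmap_def)
    ultimately show ?thesis by force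
  qed
qed

lemma basis:
  assumes g: "good x a"
  shows "is_basis_family (gspace N p n) (SS x a) (eb x a)"
  unfolding is_basis_family_def
proof (intro conjI ballI)
  show "finite (SS x a)" by (rule finite_SS)
  fix s assume "s \<in> SS x a"
  then show "eb x a s \<in> gspace N p n" by (auto simp: gspace_def eb_in_V)
next
  fix v assume v: "v \<in> gspace N p n"
  have ex: "\<exists>c. (\<forall>s. s \<notin> SS x a \<longrightarrow> c s = 0) \<and> v = (\<lambda>k. \<Sum>s\<in>SS x a. c s * eb x a s k)"
    by (rule span_lemma[OF finite_gI finite_SS uniq[OF g] I_gmap])
       (use v in \<open>auto simp: gspace_def eb_in_V\<close>)
  show "\<exists>!c. (\<forall>s. s \<notin> SS x a \<longrightarrow> c s = 0) \<and> v = (\<lambda>k. \<Sum>s\<in>SS x a. c s * eb x a s k)"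
  proof (rule ex_ex1I[OF ex])
    fix c1 c2
    assume h1: "(\<forall>s. s \<notin> SS x a \<longrightarrow> c1 s = 0) \<and> v = (\<lambda>k. \<Sum>s\<in>SS x a. c1 s * eb x a s k)"
      and h2: "(\<forall>s. s \<notin> SS x a \<longrightarrow> c2 s = 0) \<and> v = (\<lambda>k. \<Sum>s\<in>SS x a. c2 s * eb x a s k)"
    have "(\<lambda>k. \<Sum>s\<in>SS x a. (c1 s - c2 s) * eb x a s k) = (\<lambda>_. 0)"
    proof
      fix k
      have "(\<Sum>s\<in>SS x a. (c1 s - c2 s) * eb x a s k) = (\<Sum>s\<in>SS x a. c1 s * eb x a s k) - (\<Sum>s\<in>SS x a. c2 s * eb x a s k)"
        by (simp add: left_diff_distrib sum_subtractf)
      also have "\<dots> = v k - v k" using h1 h2 by metis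
      finally show "(\<Sum>s\<in>SS x a. (c1 s - c2 s) * eb x a s k) = 0" by simp
    qed
    then have "\<forall>s\<in>SS x a. c1 s - c2 s = 0"
      by (intro uniq[OF g, of "\<lambda>s. c1 s - c2 s"]) (use h1 h2 in auto)
    then show "c1 = c2" using h1 h2 by (metis eq_iff_diff_eq_0 ext)
  qed
qed

lemma JKdec:
  assumes g: "good x a"
  shows "JK_decomposition (gspace N p n) (fA x) (fA a) (bl x a)"
  unfolding JK_decomposition_def
proof (intro conjI)
  show "\<forall>b\<in>set (bl x a). block_ok b"
    using hnTI set_L by (auto simp: bl_def)
  show "\<exists>e. is_basis_family (gspace N p n) {(b, i). b < length (bl x a) \<and> i < block_dim (bl x a ! b)} e \<and>
        (\<forall>b i b' j. b < length (bl x a) \<longrightarrow> i < block_dim (bl x a ! b) \<longrightarrow> b' < length (bl x a) \<longrightarrow>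
          j < block_dim (bl x a ! b') \<longrightarrow>
          fA x (e (b, i)) (e (b', j)) = (if b = b' then blockA (bl x a ! b) i j else 0) \<and>
          fA a (e (b, i)) (e (b', j)) = (if b = b' then blockB (bl x a ! b) i j else 0))"
    using basis[OF g] JKP[OF g] unfolding SS_def by blast
qed

end


lemma image_mset_mset_set_sum: "finite A \<Longrightarrow> image_mset f (mset_set A) = (\<Sum>q\<in>A. {#f q#})"
  by (induct A rule: finite_induct) auto

lemma pf_fst': "(\<lambda>z. fst z k) \<in> polyfun2"
  using pf_fst[of k] by (simp add: split_def)

lemma pf_snd': "(\<lambda>z. snd z k) \<in> polyfun2"
  using pf_snd[of k] by (simp add: split_def)

lemma pf_sub: "f \<in> polyfun2 \<Longrightarrow> g \<in> polyfun2 \<Longrightarrow> (\<lambda>z. f z - g z) \<in> polyfun2"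
proof -
  assume f: "f \<in> polyfun2" and g: "g \<in> polyfun2"
  have "(\<lambda>z. f z + (\<lambda>_. - 1) z * g z) \<in> polyfun2"
    by (intro pf_add f pf_mult pf_const g)
  then show ?thesis by simp
qed

lemma pf_prod: "finite A \<Longrightarrow> (\<And>q. q \<in> A \<Longrightarrow> f q \<in> polyfun2) \<Longrightarrow> (\<lambda>z. \<Prod>q\<in>A. f q z) \<in> polyfun2"
proof (induct A rule: finite_induct)
  case empty
  then show ?case using pf_const[of 1] by simp
next
  case (insert q A)
  have "(\<lambda>z. f q z * (\<Prod>q\<in>A. f q z)) \<in> polyfun2"
    using insert by (intro pf_mult) auto
  then show ?case using insert by simp
qed

context jk
begin

lemma mset_bl: "mset (bl x a) = {#Kron 2#} +
   (\<Sum>t\<in>{1..N}. image_mset (\<lambda>i. Jor (lamf x a t) (n t i)) (mset_set {1..p t}))"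
proof -
  let ?f = "\<lambda>(t,i). Jor (lamf x a t) (n t i)"
  have "mset (map ?f L) = image_mset ?f (mset L)" by simp
  also have "mset L = mset_set TI" using mset_set_set[OF distinct_L] set_L by simp
  also have "image_mset ?f (mset_set TI) = (\<Sum>q\<in>TI. {#?f q#})"
    by (rule image_mset_mset_set_sum[OF finite_TI])
  also have "\<dots> = (\<Sum>t\<in>{1..N}. \<Sum>i\<in>{1..p t}. {#Jor (lamf x a t) (n t i)#})"
  proof -
    have "(\<Sum>t\<in>{1..N}. \<Sum>i\<in>{1..p t}. {#Jor (lamf x a t) (n t i)#}) = (\<Sum>(t,i)\<in>Sigma {1..N} (\<lambda>t. {1..p t}). {#Jor (lamf x a t) (n t i)#})"
      by (rule sum.Sigma) auto
    then show ?thesis unfolding TI_Sigma by (simp add: case_prod_beta)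
  qed
  also have "\<dots> = (\<Sum>t\<in>{1..N}. image_mset (\<lambda>i. Jor (lamf x a t) (n t i)) (mset_set {1..p t}))"
    by (simp add: image_mset_mset_set_sum)
  finally show ?thesis by (simp add: bl_def)
qed

lemma yt_cross: "yt x t * yt a s - yt x s * yt a t = (\<alpha> t * \<beta> s - \<alpha> s * \<beta> t) * Dx x a"
  by (simp add: yt_def Dx_def algebra_simps)

lemma lam_inj:
  assumes g: "good x a" and hdist: "\<forall>t\<in>{1..N}. \<forall>s\<in>{1..N}. t \<noteq> s \<longrightarrow> \<alpha> t * \<beta> s \<noteq> \<alpha> s * \<beta> t"
  shows "inj_on (lamf x a) {1..N}"
proof (rule inj_onI)
  fix t s assume t: "t \<in> {1..N}" and s: "s \<in> {1..N}" and e: "lamf x a t = lamf x a s"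
  show "t = s"
  proof (rule ccontr)
    assume ne: "t \<noteq> s"
    have at: "yt a t \<noteq> 0" and as: "yt a s \<noteq> 0" and D: "Dx x a \<noteq> 0" using g t s by (auto simp: good_def)
    from e have "yt x t / yt a t = yt x s / yt a s" by (simp add: lamf_def)
    then have "yt x t * yt a s - yt x s * yt a t = 0" using at as by (simp add: field_simps)
    then have "(\<alpha> t * \<beta> s - \<alpha> s * \<beta> t) * Dx x a = 0" by (simp add: yt_cross)
    then show False using D hdist t s ne by auto
  qed
qed

definition Pf :: "(gidx \<Rightarrow> complex) \<times> (gidx \<Rightarrow> complex) \<Rightarrow> complex" where
  "Pf z = (fst z H1 * snd z H2 - fst z H2 * snd z H1) * (\<Prod>t\<in>{1..N}. \<alpha> t * snd z H1 + \<beta> t * snd z H2)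
     * (\<Prod>q\<in>TI. fst z (E (fst q) (snd q) 1) * (\<alpha> (fst q) * snd z H1 + \<beta> (fst q) * snd z H2)
                 - snd z (E (fst q) (snd q) 1) * (\<alpha> (fst q) * fst z H1 + \<beta> (fst q) * fst z H2))"

lemma Pf_poly: "Pf \<in> polyfun2"
proof -
  have c: "(\<lambda>z. c) \<in> polyfun2" for c by (rule pf_const)
  note pf = pf_fst' pf_snd' c
  have "(\<lambda>z. (fst z H1 * snd z H2 - fst z H2 * snd z H1) * (\<Prod>t\<in>{1..N}. \<alpha> t * snd z H1 + \<beta> t * snd z H2)
     * (\<Prod>q\<in>TI. fst z (E (fst q) (snd q) 1) * (\<alpha> (fst q) * snd z H1 + \<beta> (fst q) * snd z H2)
                 - snd z (E (fst q) (snd q) 1) * (\<alpha> (fst q) * fst z H1 + \<beta> (fst q) * fst z H2))) \<in> polyfun2"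
    by (intro pf_mult pf_sub pf_add pf_prod finite_TI finite_atLeastAtMost pf pf_mult[OF c])
  then show ?thesis by (simp add: Pf_def[abs_def])
qed

lemma Pf_good: "Pf (x, a) \<noteq> 0 \<Longrightarrow> good x a"
  by (auto simp: Pf_def good_def Dx_def yt_def finite_TI)

end


context jk
begin

lemma U_nonempty:
  assumes hnz: "\<forall>t\<in>{1..N}. (\<alpha> t, \<beta> t) \<noteq> (0, 0)"
  shows "\<exists>x a. x \<in> gspace N p n \<and> a \<in> gspace N p n \<and> Pf (x, a) \<noteq> 0"
proof -
  let ?B = "insert 0 ((\<lambda>t. - \<alpha> t / \<beta> t) ` {1..N})"
  have "finite ?B" by simp
  then obtain c :: complex where c: "c \<notin> ?B" using ex_new_if_finite[OF infinite_UNIV_char_0] by blast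
  have c0: "c \<noteq> 0" using c by auto
  have yt0: "\<alpha> t + \<beta> t * c \<noteq> 0" if t: "t \<in> {1..N}" for t
  proof (cases "\<beta> t = 0")
    case True
    then show ?thesis using hnz t by auto
  next
    case False
    show ?thesis
    proof
      assume "\<alpha> t + \<beta> t * c = 0"
      then have "c = - \<alpha> t / \<beta> t" using False by (simp add: field_simps add_eq_0_iff)
      then show False using c t by auto
    qed
  qed
  define x0 where "x0 = (\<lambda>k. case k of H1 \<Rightarrow> 1 | E t i j \<Rightarrow> (if (t,i) \<in> TI \<and> j = 1 then 1 else 0) | _ \<Rightarrow> (0::complex))"
  define a0 where "a0 = hv 1 c"
  have x0V: "x0 \<in> gspace N p n"
    unfolding gspace_def
  proof (intro CollectI allI impI)
    fix k assume k: "k \<notin> I"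
    show "x0 k = 0"
    proof (cases k)
      case (E t i j)
      then show ?thesis using k hnTI[of t i] by (auto simp: x0_def TI_def)
    qed (use k in \<open>auto simp: x0_def\<close>)
  qed
  have a0V: "a0 \<in> gspace N p n"
    unfolding gspace_def a0_def
  proof (intro CollectI allI impI)
    fix k assume k: "k \<notin> I"
    then show "hv 1 c k = 0" by (cases k) auto
  qed
  have xa: "x0 H1 = 1" "x0 H2 = 0" "a0 H1 = 1" "a0 H2 = c" "\<And>t i j. a0 (E t i j) = 0"
    by (simp_all add: x0_def a0_def)
  have xE: "x0 (E (fst q) (snd q) 1) = 1" if "q \<in> TI" for q
    using that by (simp add: x0_def)
  have xE': "x0 (E (fst q) (snd q) (Suc 0)) = 1" if "q \<in> TI" for q
    using that by (simp add: x0_def)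
  have P2: "(\<Prod>q\<in>TI. x0 (E (fst q) (snd q) 1) * (\<alpha> (fst q) * a0 H1 + \<beta> (fst q) * a0 H2)
                 - a0 (E (fst q) (snd q) 1) * (\<alpha> (fst q) * x0 H1 + \<beta> (fst q) * x0 H2))
      = (\<Prod>q\<in>TI. \<alpha> (fst q) + \<beta> (fst q) * c)"
    by (intro prod.cong refl) (simp add: xE xE' xa)
  have "Pf (x0, a0) = c * (\<Prod>t\<in>{1..N}. \<alpha> t + \<beta> t * c) * (\<Prod>q\<in>TI. \<alpha> (fst q) + \<beta> (fst q) * c)"
    unfolding Pf_def fst_conv snd_conv P2 by (simp add: xa)
  also have "\<dots> \<noteq> 0"
  proof -
    have "(\<Prod>t\<in>{1..N}. \<alpha> t + \<beta> t * c) \<noteq> 0" using yt0 by (simp add: prod_zero_iff)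
    moreover have "(\<Prod>q\<in>TI. \<alpha> (fst q) + \<beta> (fst q) * c) \<noteq> 0"
    proof -
      have "\<forall>q\<in>TI. \<alpha> (fst q) + \<beta> (fst q) * c \<noteq> 0" using yt0 by (auto simp: TI_def)
      then show ?thesis using finite_TI by (simp add: prod_zero_iff)
    qed
    ultimately show ?thesis using c0 by simp
  qed
  finally show ?thesis using x0V a0V by blast
qed

end

theorem theorem19:
  fixes N :: nat and p :: "nat \<Rightarrow> nat" and n :: "nat \<Rightarrow> nat \<Rightarrow> nat"
    and \<alpha> \<beta> :: "nat \<Rightarrow> complex"
  assumes hp: "\<forall>t\<in>{1..N}. p t \<ge> 1"
    and hn: "\<forall>t\<in>{1..N}. \<forall>i\<in>{1..p t}. n t i \<ge> 1"
    and hmono: "\<forall>t\<in>{1..N}. \<forall>i\<in>{1..p t}. \<forall>j\<in>{1..p t}. i \<le> j \<longrightarrow> n t j \<le> n t i"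
    and hnz: "\<forall>t\<in>{1..N}. (\<alpha> t, \<beta> t) \<noteq> (0, 0)"
    and hdist: "\<forall>t\<in>{1..N}. \<forall>s\<in>{1..N}. t \<noteq> s \<longrightarrow> \<alpha> t * \<beta> s \<noteq> \<alpha> s * \<beta> t"
  shows "is_lie_algebra (gspace N p n) (gbr N p n \<alpha> \<beta>) \<and>
    (\<exists>U. U \<noteq> {} \<and> zariski_open_in (gspace N p n \<times> gspace N p n) U \<and>
      (\<forall>(x, a)\<in>U. \<exists>lam :: nat \<Rightarrow> complex option. inj_on lam {1..N} \<and>
         (\<exists>bl. JK_decomposition (gspace N p n) (formA N p n \<alpha> \<beta> x) (formA N p n \<alpha> \<beta> a) bl \<and>
               mset bl = {#Kron 2#} +
                 (\<Sum>t\<in>{1..N}. image_mset (\<lambda>i. Jor (lam t) (n t i)) (mset_set {1..p t})))))"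
proof -
  interpret jk N p n \<alpha> \<beta>
  proof
    fix t i assume "(t, i) \<in> jk0.TI N p"
    then show "1 \<le> n t i" using hn by (auto simp: jk0.TI_def)
  qed
  define U where "U = {z \<in> gspace N p n \<times> gspace N p n. \<exists>f\<in>{Pf}. f z \<noteq> 0}"
  have U1: "U \<noteq> {}" using U_nonempty[OF hnz] by (auto simp: U_def)
  have U2: "zariski_open_in (gspace N p n \<times> gspace N p n) U"
    unfolding zariski_open_in_def U_def by (rule exI[of _ "{Pf}"]) (simp add: Pf_poly)
  have U3: "\<forall>(x, a)\<in>U. \<exists>lam :: nat \<Rightarrow> complex option. inj_on lam {1..N} \<and>
         (\<exists>bl. JK_decomposition (gspace N p n) (formA N p n \<alpha> \<beta> x) (formA N p n \<alpha> \<beta> a) bl \<and>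
               mset bl = {#Kron 2#} +
                 (\<Sum>t\<in>{1..N}. image_mset (\<lambda>i. Jor (lam t) (n t i)) (mset_set {1..p t})))"
  proof (intro ballI, clarify)
    fix x a assume "(x, a) \<in> U"
    then have g: "good x a" using Pf_good by (auto simp: U_def)
    show "\<exists>lam :: nat \<Rightarrow> complex option. inj_on lam {1..N} \<and>
         (\<exists>bl. JK_decomposition (gspace N p n) (formA N p n \<alpha> \<beta> x) (formA N p n \<alpha> \<beta> a) bl \<and>
               mset bl = {#Kron 2#} +
                 (\<Sum>t\<in>{1..N}. image_mset (\<lambda>i. Jor (lam t) (n t i)) (mset_set {1..p t})))"
      by (intro exI[of _ "lamf x a"] conjI lam_inj[OF g hdist] exI[of _ "bl x a"] JKdec[OF g] mset_bl)
  qed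
  show ?thesis
    by (intro conjI lie exI[of _ U] U1 U2 U3)
qed


end
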